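(* Let $\theta\in(0,\frac{\pi}{2}]$, $1\le k\le n-1$, $f$ a positive smooth function on $\mathcal{C}_\theta$, and $h$ a positive admissible solution of $$\frac{\sigma_n(\nabla^2h+h\sigma)}{\sigma_{n-k}(\nabla^2h+h\sigma)}=f^{-1}\ \text{in }\mathcal{C}_\theta,\qquad \nabla_\mu h=\cot\theta\, h\ \text{on }\partial\mathcal{C}_\theta.$$ Then $\min_{\mathcal{C}_\theta}h\le C$ for a positive constant $C$ depending only on $f$. Furthermore, if $h$ is moreover capillary even and is the support function of a strictly convex capillary hypersurface $\Sigma\subset\overline{\mathbb{R}^{n+1}_+}$, then the capillary inner radius of its convex body $\widehat\Sigma$ satisfies $\rho_-(\widehat\Sigma,\theta)\le C$.
   Context: $e=-E_{n+1}$, $\mathcal{C}_\theta=\{\xi\in\overline{\mathbb{R}^{n+1}_+}: |\xi-\cos\theta\,e|=1\}$ with round metric $\sigma$, gradient $\nabla$, Hessian $\nabla^2$; $\mu$ is the outward unit co-normal of $\partial\mathcal{C}_\theta$. $\sigma_m(A)$ is the $m$-th elementary symmetric function of the eigenvalues of $A$ w.r.t. $\sigma$. $h$ is admissible if $\nabla^2h+h\sigma>0$. Capillary even: $h(\xi)=h(\widehat\xi)$, $\widehat\xi=(-\xi_1,\dots,-\xi_n,\xi_{n+1})$. A capillary hypersurface $\Sigma$ is a compact hypersurface with boundary in $\overline{\mathbb{R}^{n+1}_+}$, interior in $\mathbb{R}^{n+1}_+$, boundary on $\partial\mathbb{R}^{n+1}_+$, with $\langle\nu,e\rangle=\cos(\pi-\theta)$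 on $\partial\Sigma$; for strictly convex $\Sigma$ the map $\widetilde\nu=\nu+\cos\theta\,e:\Sigma\to\mathcal{C}_\theta$ is a diffeomorphism and its support function is $h(\xi)=\langle\xi-\cos\theta\,e,\widetilde\nu^{-1}(\xi)\rangle$. $\widehat\Sigma$ is the region bounded by $\Sigma$ and $\partial\mathbb{R}^{n+1}_+$. With $\mathcal{C}_{r,\theta}(x_0)=\{x\in\overline{\mathbb{R}^{n+1}_+}:|x-(x_0+r\cos\theta\,e)|=r\}$ and $\widehat{\mathcal{C}_{r,\theta}(x_0)}$ the region it bounds with $\partial\mathbb{R}^{n+1}_+$, $\rho_-(\widehat\Sigma,\theta)=\sup\{r>0:\widehat{\mathcal{C}_{r,\theta}(x_0)}\subset\widehat\Sigma\text{ for some }x_0\in\partial\mathbb{R}^{n+1}_+\}$. *)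

theory Defs
  imports "HOL-Analysis.Analysis"
begin

text \<open>Ambient space R^(n+1) is an abstract euclidean space 'a with DIM('a) = n+1.
  The fixed unit vector e = -E_(n+1) is minus a fixed basis vector.
  The closed upper half space is {x. x \<bullet> e \<le> 0}.\<close>

definition capE :: "'a::euclidean_space" where
  "capE = - (SOME b. b \<in> Basis)"

definition capc :: "real \<Rightarrow> 'a::euclidean_space" where
  "capc \<theta> = cos \<theta> *\<^sub>R capE"

definition cap :: "real \<Rightarrow> 'a::euclidean_space set" where
  "cap \<theta> = {\<xi>. \<xi> \<bullet> capE \<le> 0 \<and> norm (\<xi> - capc \<theta>) = 1}"

definition tang :: "real \<Rightarrow> 'a::euclidean_space \<Rightarrow> 'a set" where
  "tang \<theta> \<xi> = {u. u \<bullet> (\<xi> - capc \<theta>) = 0}"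

fun dd :: "('a::real_normed_vector \<Rightarrow> real) \<Rightarrow> 'a list \<Rightarrow> 'a \<Rightarrow> real" where
  "dd g [] = g"
| "dd g (v # vs) = (\<lambda>x. frechet_derivative (dd g vs) (at x) v)"

definition smooth_on :: "'a::real_normed_vector set \<Rightarrow> ('a \<Rightarrow> real) \<Rightarrow> bool" where
  "smooth_on U g \<longleftrightarrow> (\<forall>vs. dd g vs differentiable_on U)"

definition smooth_on_cap :: "real \<Rightarrow> ('a::euclidean_space \<Rightarrow> real) \<Rightarrow> bool" where
  "smooth_on_cap \<theta> h \<longleftrightarrow>
     (\<exists>U g. open U \<and> cap \<theta> \<subseteq> U \<and> smooth_on U g \<and> (\<forall>x\<in>cap \<theta>. g x = h x))"

definition cap_ext :: "real \<Rightarrow> ('a::euclidean_space \<Rightarrow> real) \<Rightarrow> 'a \<Rightarrow> real" where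
  "cap_ext \<theta> h = (SOME g. \<exists>U. open U \<and> cap \<theta> \<subseteq> U \<and> smooth_on U g \<and> (\<forall>x\<in>cap \<theta>. g x = h x))"

text \<open>The symmetric bilinear form (nabla^2 h + h sigma) at xi on the tangent space,
  via the Gauss formula for the unit sphere centred at cos theta e:
  Hess_S h (u,v) = D^2 g (u,v) - <Dg, N> <u,v>, N = xi - center.\<close>
definition sph_form :: "real \<Rightarrow> ('a::euclidean_space \<Rightarrow> real) \<Rightarrow> 'a \<Rightarrow> 'a \<Rightarrow> 'a \<Rightarrow> real" where
  "sph_form \<theta> h \<xi> u v =
     (let g = cap_ext \<theta> h in
       dd g [u, v] \<xi> - dd g [\<xi> - capc \<theta>] \<xi> * (u \<bullet> v) + h \<xi> * (u \<bullet> v))"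

text \<open>m-th elementary symmetric function of the eigenvalues of a symmetric bilinear form A
  on an N-dimensional subspace T, with respect to the induced metric.\<close>
definition sigma_form :: "nat \<Rightarrow> 'a::euclidean_space set \<Rightarrow> ('a \<Rightarrow> 'a \<Rightarrow> real) \<Rightarrow> nat \<Rightarrow> real" where
  "sigma_form N T A m = (SOME s. \<exists>b lam.
      (\<forall>i<N. b i \<in> T) \<and>
      (\<forall>i<N. \<forall>j<N. b i \<bullet> b j = (if i = j then 1 else 0)) \<and>
      (\<forall>i<N. \<forall>j<N. A (b i) (b j) = (if i = j then lam i else 0)) \<and>
      s = (\<Sum>S\<in>{S. S \<subseteq> {..<N} \<and> card S = m}. \<Prod>i\<in>S. lam i))"

definition sigma_cap :: "real \<Rightarrow> ('a::euclidean_space \<Rightarrow> real) \<Rightarrow> nat \<Rightarrow> 'a \<Rightarrow> real" where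
  "sigma_cap \<theta> h m \<xi> = sigma_form (DIM('a) - 1) (tang \<theta> \<xi>) (sph_form \<theta> h \<xi>) m"

definition admissible :: "real \<Rightarrow> ('a::euclidean_space \<Rightarrow> real) \<Rightarrow> bool" where
  "admissible \<theta> h \<longleftrightarrow>
     (\<forall>\<xi>\<in>cap \<theta>. \<forall>u\<in>tang \<theta> \<xi>. u \<noteq> 0 \<longrightarrow> sph_form \<theta> h \<xi> u u > 0)"

text \<open>Outward unit co-normal of the boundary of C_theta (normalised tangential projection of e).\<close>
definition conormal :: "real \<Rightarrow> 'a::euclidean_space \<Rightarrow> 'a" where
  "conormal \<theta> \<xi> =
     (let w = capE - (capE \<bullet> (\<xi> - capc \<theta>)) *\<^sub>R (\<xi> - capc \<theta>) in w /\<^sub>R norm w)"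

definition neumann_bc :: "real \<Rightarrow> ('a::euclidean_space \<Rightarrow> real) \<Rightarrow> bool" where
  "neumann_bc \<theta> h \<longleftrightarrow>
     (\<forall>\<xi>\<in>cap \<theta>. \<xi> \<bullet> capE = 0 \<longrightarrow> dd (cap_ext \<theta> h) [conormal \<theta> \<xi>] \<xi> = cot \<theta> * h \<xi>)"

text \<open>hat xi = (-xi_1,...,-xi_n, xi_(n+1)).\<close>
definition refl_e :: "'a::euclidean_space \<Rightarrow> 'a" where
  "refl_e \<xi> = (2 * (\<xi> \<bullet> capE)) *\<^sub>R capE - \<xi>"

definition capillary_even :: "real \<Rightarrow> ('a::euclidean_space \<Rightarrow> real) \<Rightarrow> bool" where
  "capillary_even \<theta> h \<longleftrightarrow> (\<forall>\<xi>\<in>cap \<theta>. h (refl_e \<xi>) = h \<xi>)"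

definition vdiff :: "real \<Rightarrow> ('a::euclidean_space \<Rightarrow> 'a) \<Rightarrow> 'a \<Rightarrow> 'a \<Rightarrow> 'a" where
  "vdiff \<theta> X \<xi> u = (\<Sum>b\<in>Basis. dd (cap_ext \<theta> (\<lambda>x. X x \<bullet> b)) [u] \<xi> *\<^sub>R b)"

text \<open>X : C_theta -> R^(n+1) is the inverse of the map nu + cos theta e of a strictly convex
  capillary hypersurface Sigma = X(C_theta): X is a smooth embedding of the cap, the interior
  goes into the open half space and the boundary into its boundary hyperplane, the outward unit
  normal of Sigma at X(xi) is xi - cos theta e (so nu + cos theta e = xi, and on the boundary
  <nu,e> = -cos theta = cos(pi-theta)), and the second fundamental form
  <d nu (u), dX(u)> = <u, dX(u)> is positive definite.\<close>
definition capillary_param :: "real \<Rightarrow> ('a::euclidean_space \<Rightarrow> 'a) \<Rightarrow> bool" where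
  "capillary_param \<theta> (X::'a \<Rightarrow> 'a) \<longleftrightarrow>
     (\<forall>b\<in>(Basis::'a set). smooth_on_cap \<theta> (\<lambda>x. X x \<bullet> b)) \<and>
     inj_on X (cap \<theta>) \<and>
     (\<forall>\<xi>\<in>cap \<theta>. \<xi> \<bullet> capE < 0 \<longrightarrow> X \<xi> \<bullet> capE < 0) \<and>
     (\<forall>\<xi>\<in>cap \<theta>. \<xi> \<bullet> capE = 0 \<longrightarrow> X \<xi> \<bullet> capE = 0) \<and>
     (\<forall>\<xi>\<in>cap \<theta>. \<forall>u\<in>tang \<theta> \<xi>. vdiff \<theta> X \<xi> u \<bullet> (\<xi> - capc \<theta>) = 0) \<and>
     (\<forall>\<xi>\<in>cap \<theta>. \<forall>u\<in>tang \<theta> \<xi>. u \<noteq> 0 \<longrightarrow> u \<bullet> vdiff \<theta> X \<xi> u > 0) \<and>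
     (\<forall>\<xi>\<in>(cap \<theta> :: 'a set). \<xi> \<bullet> capE = 0 \<longrightarrow> (\<xi> - capc \<theta>) \<bullet> capE = cos (pi - \<theta>))"

text \<open>Region bounded by Sigma and the boundary hyperplane: closure of the bounded
  components of the open half space minus Sigma.\<close>
definition hat_region :: "'a::euclidean_space set \<Rightarrow> 'a set" where
  "hat_region \<Sigma> = closure (\<Union>{C\<in>components ({x. x \<bullet> capE < 0} - \<Sigma>). bounded C})"

text \<open>Region bounded by C_(r,theta)(x0) and the hyperplane.\<close>
definition cap_ball :: "real \<Rightarrow> real \<Rightarrow> 'a::euclidean_space \<Rightarrow> 'a set" where
  "cap_ball \<theta> r x0 = {x. x \<bullet> capE \<le> 0 \<and> norm (x - (x0 + (r * cos \<theta>) *\<^sub>R capE)) \<le> r}"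

definition rho_minus :: "'a::euclidean_space set \<Rightarrow> real \<Rightarrow> real" where
  "rho_minus K \<theta> = Sup {r. r > 0 \<and> (\<exists>x0. x0 \<bullet> capE = 0 \<and> cap_ball \<theta> r x0 \<subseteq> K)}"

end

theory Submission
  imports Defs
begin

abbreviation Dg :: "('a::real_normed_vector \<Rightarrow> real) \<Rightarrow> 'a \<Rightarrow> 'a \<Rightarrow> real" where
  "Dg g x \<equiv> frechet_derivative g (at x)"

lemma capE_props: "norm (capE::'a::euclidean_space) = 1" "(capE::'a) \<bullet> capE = 1"
proof -
  have "(SOME b. b \<in> (Basis::'a set)) \<in> Basis" using nonempty_Basis by (simp add: some_in_eq)
  then have "norm (SOME b. b \<in> (Basis::'a set)) = 1" by simp
  then show n: "norm (capE::'a) = 1" unfolding capE_def by simp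
  then show "(capE::'a) \<bullet> capE = 1" by (simp add: norm_eq_1)
qed

lemma capc_e: "capc \<theta> \<bullet> (capE::'a::euclidean_space) = cos \<theta>"
  unfolding capc_def by (simp add: capE_props(2))

lemma cap_N:
  assumes "\<xi> \<in> cap \<theta>"
  shows "norm (\<xi> - capc \<theta>) = 1" "(\<xi> - capc \<theta>) \<bullet> (\<xi> - capc \<theta>) = 1" "\<xi> \<bullet> capE \<le> 0"
    "(\<xi> - capc \<theta>) \<bullet> capE = \<xi> \<bullet> capE - cos \<theta>"
  using assms unfolding cap_def by (auto simp: norm_eq_1 inner_diff_left capc_e)

lemma near0:
  fixes f :: "real \<Rightarrow> 'b::topological_space"
  assumes "continuous (at 0) f" "open S" "f 0 \<in> S"
  shows "\<exists>d>0. \<forall>t. \<bar>t\<bar> < d \<longrightarrow> f t \<in> S"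
proof -
  have "(f \<longlongrightarrow> f 0) (at 0)" using assms(1) by (simp add: continuous_at)
  then have "eventually (\<lambda>t. f t \<in> S) (at 0)" using assms(2,3) by (rule topological_tendstoD)
  then obtain d where d: "d > 0" "\<forall>t\<in>UNIV. t \<noteq> 0 \<and> dist t 0 < d \<longrightarrow> f t \<in> S"
    unfolding eventually_at by blast
  show ?thesis
  proof (intro exI[of _ d] conjI allI impI d(1))
    fix t :: real assume "\<bar>t\<bar> < d"
    then show "f t \<in> S" using d(2) assms(3) by (cases "t = 0") (auto simp: dist_real_def)
  qed
qed

definition gam :: "real \<Rightarrow> 'a::euclidean_space \<Rightarrow> 'a \<Rightarrow> real \<Rightarrow> 'a" where
  "gam \<theta> \<xi> u t = capc \<theta> + cos t *\<^sub>R (\<xi> - capc \<theta>) + sin t *\<^sub>R u"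

lemma gam_0: "gam \<theta> \<xi> u 0 = \<xi>" unfolding gam_def by simp

lemma gam_deriv: "(gam \<theta> \<xi> u has_vector_derivative (- sin t *\<^sub>R (\<xi> - capc \<theta>) + cos t *\<^sub>R u)) (at t)"
  unfolding gam_def
  by (auto intro!: derivative_eq_intros simp: has_vector_derivative_def algebra_simps)

lemma gam_cont: "continuous (at t) (gam \<theta> \<xi> u)"
  using gam_deriv has_vector_derivative_continuous by blast

lemma gam_sphere:
  assumes "\<xi> \<in> cap \<theta>" "u \<in> tang \<theta> \<xi>" "norm u = 1"
  shows "norm (gam \<theta> \<xi> u t - capc \<theta>) = 1"
proof -
  define N where "N = \<xi> - capc \<theta>"
  have NN: "N \<bullet> N = 1" using cap_N[OF assms(1)] unfolding N_def by simp
  have uN: "u \<bullet> N = 0" using assms(2) unfolding tang_def N_def by simp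
  have uu: "u \<bullet> u = 1" using assms(3) by (simp add: norm_eq_1)
  have "(gam \<theta> \<xi> u t - capc \<theta>) \<bullet> (gam \<theta> \<xi> u t - capc \<theta>) = (cos t)\<^sup>2 * (N \<bullet> N) + 2 * cos t * sin t * (u \<bullet> N) + (sin t)\<^sup>2 * (u \<bullet> u)"
    unfolding gam_def N_def[symmetric] by (simp add: inner_add_left inner_add_right inner_commute power2_eq_square algebra_simps)
  also have "\<dots> = 1" using NN uN uu by simp
  finally show ?thesis by (simp add: norm_eq_1)
qed

lemma gam_e: "gam \<theta> \<xi> u t \<bullet> capE = cos \<theta> + cos t * ((\<xi> - capc \<theta>) \<bullet> capE) + sin t * (u \<bullet> capE)"
  unfolding gam_def by (simp add: inner_add_left capc_e)

lemma good_dir: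
  assumes xi: "\<xi> \<in> cap \<theta>" and u: "u \<in> tang \<theta> \<xi>" "norm u = 1"
    and cases: "\<xi> \<bullet> capE < 0 \<or> u \<bullet> capE < 0 \<or> (cos \<theta> = 0 \<and> u \<bullet> capE \<le> 0)"
  shows "\<exists>\<delta>>0. \<forall>t. 0 \<le> t \<and> t < \<delta> \<longrightarrow> gam \<theta> \<xi> u t \<in> cap \<theta>"
proof -
  define f where "f = (\<lambda>t. gam \<theta> \<xi> u t \<bullet> capE)"
  have f0: "f 0 = \<xi> \<bullet> capE" unfolding f_def gam_0 ..
  have inS: "gam \<theta> \<xi> u t \<in> cap \<theta>" if "f t \<le> 0" for t
    using that gam_sphere[OF xi u] unfolding cap_def f_def by simp
  have "\<exists>\<delta>>0. \<forall>t. 0 \<le> t \<and> t < \<delta> \<longrightarrow> f t \<le> 0"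
  proof -
    consider "\<xi> \<bullet> capE < 0" | "u \<bullet> capE < 0" | "cos \<theta> = 0" "u \<bullet> capE \<le> 0" using cases by blast
    then show ?thesis
    proof cases
      case 1
      have "continuous (at 0) f" unfolding f_def
        by (intro continuous_intros gam_cont)
      then obtain d where d: "d > 0" "\<forall>t. \<bar>t\<bar> < d \<longrightarrow> f t \<in> {..<0}"
        using near0[of f "{..<0}"] 1 f0 by auto
      show ?thesis
      proof (intro exI[of _ d] conjI allI impI d(1))
        fix t assume "0 \<le> t \<and> t < d"
        then have "f t \<in> {..<0}" using d(2) by auto
        then show "f t \<le> 0" by simp
      qed
    next
      case 2
      have "(f has_real_derivative (u \<bullet> capE)) (at 0)"
      proof -
        have "(f has_real_derivative ((- sin 0 *\<^sub>R (\<xi> - capc \<theta>) + cos 0 *\<^sub>R u) \<bullet> capE)) (at 0)"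
          unfolding f_def using gam_deriv[of \<theta> \<xi> u 0]
          by (auto intro!: derivative_eq_intros simp: has_vector_derivative_def has_field_derivative_def)
        then show ?thesis by simp
      qed
      then obtain d where d: "d > 0" "\<forall>h>0. h < d \<longrightarrow> f (0 + h) < f 0"
        using DERIV_neg_dec_right 2 by blast
      show ?thesis
      proof (intro exI[of _ d] conjI allI impI d(1))
        fix t assume t: "0 \<le> t \<and> t < d"
        show "f t \<le> 0"
        proof (cases "t = 0")
          case True then show ?thesis using f0 cap_N(3)[OF xi] by simp
        next
          case False then show ?thesis using d(2)[rule_format, of t] t f0 cap_N(3)[OF xi] by simp
        qed
      qed
    next
      case 3
      show ?thesis
      proof (intro exI[of _ "pi/2"] conjI allI impI)
        show "pi / 2 > 0" by simp
        fix t assume t: "0 \<le> t \<and> t < pi / 2"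
        have "cos t \<ge> 0" using t by (intro cos_ge_zero) auto
        moreover have "sin t \<ge> 0" using t by (intro sin_ge_zero) auto
        ultimately have "cos t * (\<xi> \<bullet> capE) \<le> 0" "sin t * (u \<bullet> capE) \<le> 0"
          using cap_N(3)[OF xi] 3(2) by (auto simp: mult_nonneg_nonpos)
        then show "f t \<le> 0" unfolding f_def gam_e cap_N(4)[OF xi] using 3(1) by simp
      qed
    qed
  qed
  then show ?thesis using inS by blast
qed

lemma ball_add: "norm w < r \<Longrightarrow> \<xi> + w \<in> ball \<xi> r" for \<xi> :: "'a::real_normed_vector"
  by (simp add: dist_norm)

lemma line_deriv:
  fixes g :: "'a::real_normed_vector \<Rightarrow> real"
  assumes "g differentiable (at (a + t *\<^sub>R u))"
  shows "((\<lambda>t. g (a + t *\<^sub>R u)) has_real_derivative Dg g (a + t *\<^sub>R u) u) (at t)"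
proof -
  have g: "(g has_derivative Dg g (a + t *\<^sub>R u)) (at (a + t *\<^sub>R u))"
    using assms frechet_derivative_works by blast
  have lin: "linear (Dg g (a + t *\<^sub>R u))" using assms linear_frechet_derivative by blast
  have p: "((\<lambda>t. a + t *\<^sub>R u) has_derivative (\<lambda>h. h *\<^sub>R u)) (at t)"
    by (auto intro!: derivative_eq_intros)
  have "((\<lambda>t. g (a + t *\<^sub>R u)) has_derivative (\<lambda>h. Dg g (a + t *\<^sub>R u) (h *\<^sub>R u))) (at t)"
    using has_derivative_compose[OF p g] by simp
  moreover have "(\<lambda>h. Dg g (a + t *\<^sub>R u) (h *\<^sub>R u)) = (*) (Dg g (a + t *\<^sub>R u) u)"
    using linear_scale[OF lin] by (auto simp: mult.commute)
  ultimately show ?thesis by (simp add: has_field_derivative_def)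
qed

lemma schwarz_aux:
  fixes g :: "'a::euclidean_space \<Rightarrow> real"
  assumes U: "open U" "\<xi> \<in> U" and dg: "\<forall>x\<in>U. g differentiable (at x)"
    and du: "(\<lambda>x. Dg g x u) differentiable (at \<xi>)"
    and e: "e > 0"
  shows "\<exists>s0>0. \<forall>s. 0 < s \<and> s < s0 \<longrightarrow>
     \<bar>g (\<xi> + s *\<^sub>R u + s *\<^sub>R v) - g (\<xi> + s *\<^sub>R u) - g (\<xi> + s *\<^sub>R v) + g \<xi>
        - s\<^sup>2 * frechet_derivative (\<lambda>x. Dg g x u) (at \<xi>) v\<bar>
      \<le> e * s\<^sup>2 * (2 * norm u + norm v)"
proof -
  define G where "G = (\<lambda>x. Dg g x u)"
  define L where "L = frechet_derivative G (at \<xi>)"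
  have GL: "(G has_derivative L) (at \<xi>)" using du frechet_derivative_works
    unfolding G_def L_def by blast
  have linL: "linear L" using GL has_derivative_linear by blast
  obtain d where d: "d > 0" "\<forall>y. norm (y - \<xi>) < d \<longrightarrow> norm (G y - G \<xi> - L (y - \<xi>)) \<le> e * norm (y - \<xi>)"
    using GL e unfolding has_derivative_at_alt by blast
  obtain r where r: "r > 0" "ball \<xi> r \<subseteq> U" using U open_contains_ball by blast
  define K where "K = norm u + norm v + 1"
  have K: "K > 0" unfolding K_def by (simp add: add_nonneg_pos)
  define s0 where "s0 = min d r / K"
  have s0: "s0 > 0" using d r K unfolding s0_def by simp
  show ?thesis
  proof (intro exI[of _ s0] conjI allI impI s0)
    fix s assume s: "0 < s \<and> s < s0"
    have sK: "s * K < min d r" using s K unfolding s0_def by (simp add: field_simps)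
    have small: "norm (t *\<^sub>R u + s *\<^sub>R v) < min d r" "norm (t *\<^sub>R u) < min d r"
      if "0 \<le> t" "t \<le> s" for t
    proof -
      have "norm (t *\<^sub>R u + s *\<^sub>R v) \<le> t * norm u + s * norm v"
        using norm_triangle_ineq[of "t *\<^sub>R u" "s *\<^sub>R v"] that s by simp
      also have "\<dots> \<le> s * norm u + s * norm v" using that by (simp add: mult_right_mono)
      also have "\<dots> < min d r" using sK unfolding K_def using s by (simp add: algebra_simps)
      finally show "norm (t *\<^sub>R u + s *\<^sub>R v) < min d r" .
      have "norm (t *\<^sub>R u) \<le> s * norm u" using that by (simp add: mult_right_mono)
      also have "\<dots> \<le> s * K" using s unfolding K_def by (intro mult_left_mono) auto
      also have "\<dots> < min d r" using sK .
      finally show "norm (t *\<^sub>R u) < min d r" .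
    qed
    define \<psi> where "\<psi> = (\<lambda>t. g (\<xi> + s *\<^sub>R v + t *\<^sub>R u) - g (\<xi> + t *\<^sub>R u))"
    define \<psi>' where "\<psi>' = (\<lambda>t. G (\<xi> + s *\<^sub>R v + t *\<^sub>R u) - G (\<xi> + t *\<^sub>R u))"
    have der: "(\<psi> has_real_derivative \<psi>' t) (at t)" if "0 \<le> t" "t \<le> s" for t
    proof -
      have "\<xi> + s *\<^sub>R v + t *\<^sub>R u \<in> ball \<xi> r"
        using ball_add[OF small(1)[OF that], of \<xi>] by (simp add: algebra_simps)
      then have "\<xi> + s *\<^sub>R v + t *\<^sub>R u \<in> U" using r by blast
      then have d1: "g differentiable (at (\<xi> + s *\<^sub>R v + t *\<^sub>R u))" using dg by blast
      have "\<xi> + t *\<^sub>R u \<in> ball \<xi> r"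
        using ball_add[OF small(2)[OF that], of \<xi>] by (simp add: algebra_simps)
      then have "\<xi> + t *\<^sub>R u \<in> U" using r by blast
      then have d2: "g differentiable (at (\<xi> + t *\<^sub>R u))" using dg by blast
      show ?thesis unfolding \<psi>_def \<psi>'_def G_def
        by (intro DERIV_diff line_deriv d1 d2)
    qed
    obtain \<tau> where \<tau>: "0 < \<tau>" "\<tau> < s" "\<psi> s - \<psi> 0 = (s - 0) * \<psi>' \<tau>"
      using MVT2[of 0 s \<psi> \<psi>'] der s by auto
    define w1 where "w1 = \<tau> *\<^sub>R u + s *\<^sub>R v"
    define w2 where "w2 = \<tau> *\<^sub>R u"
    have n1: "norm w1 < d" "norm w2 < d" using small[of \<tau>] \<tau> unfolding w1_def w2_def by auto
    have e1: "norm (G (\<xi> + w1) - G \<xi> - L w1) \<le> e * norm w1" using d(2)[rule_format, of "\<xi> + w1"] n1 by simp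
    have e2: "norm (G (\<xi> + w2) - G \<xi> - L w2) \<le> e * norm w2" using d(2)[rule_format, of "\<xi> + w2"] n1 by simp
    have Lw: "L w1 - L w2 = s * L v" unfolding w1_def w2_def
      using linL by (simp add: linear_add linear_scale)
    have "\<psi>' \<tau> = (G (\<xi> + w1) - G \<xi> - L w1) - (G (\<xi> + w2) - G \<xi> - L w2) + s * L v"
      unfolding \<psi>'_def w1_def w2_def using Lw[unfolded w1_def w2_def] by (simp add: algebra_simps)
    then have "\<bar>\<psi>' \<tau> - s * L v\<bar> \<le> e * norm w1 + e * norm w2" using e1 e2 by simp
    also have "\<dots> \<le> e * (s * (2 * norm u + norm v))"
    proof -
      have a: "norm (\<tau> *\<^sub>R u) \<le> s * norm u" using \<tau> by (simp add: mult_right_mono)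
      have b: "norm (s *\<^sub>R v) = s * norm v" using s by simp
      have "norm w1 \<le> s * norm u + s * norm v" unfolding w1_def
        using norm_triangle_ineq[of "\<tau> *\<^sub>R u" "s *\<^sub>R v"] a b by linarith
      moreover have "norm w2 \<le> s * norm u" unfolding w2_def using a .
      ultimately have "norm w1 + norm w2 \<le> s * (2 * norm u + norm v)" by (simp add: algebra_simps)
      then have "e * (norm w1 + norm w2) \<le> e * (s * (2 * norm u + norm v))"
        using e by (intro mult_left_mono) auto
      then show ?thesis by (simp add: algebra_simps)
    qed
    finally have bd: "\<bar>\<psi>' \<tau> - s * L v\<bar> \<le> e * (s * (2 * norm u + norm v))" .
    have "\<psi> s - \<psi> 0 = g (\<xi> + s *\<^sub>R u + s *\<^sub>R v) - g (\<xi> + s *\<^sub>R u) - g (\<xi> + s *\<^sub>R v) + g \<xi>"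
      unfolding \<psi>_def by (simp add: algebra_simps)
    then have "g (\<xi> + s *\<^sub>R u + s *\<^sub>R v) - g (\<xi> + s *\<^sub>R u) - g (\<xi> + s *\<^sub>R v) + g \<xi> - s\<^sup>2 * L v
        = s * (\<psi>' \<tau> - s * L v)" using \<tau> by (simp add: power2_eq_square algebra_simps)
    moreover have "\<bar>s * (\<psi>' \<tau> - s * L v)\<bar> \<le> e * s\<^sup>2 * (2 * norm u + norm v)"
    proof -
      have "\<bar>s * (\<psi>' \<tau> - s * L v)\<bar> = s * \<bar>\<psi>' \<tau> - s * L v\<bar>" using s by (simp add: abs_mult)
      also have "\<dots> \<le> s * (e * (s * (2 * norm u + norm v)))"
        by (rule mult_left_mono[OF bd]) (use s in simp)
      also have "\<dots> = e * s\<^sup>2 * (2 * norm u + norm v)" by (simp add: power2_eq_square)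
      finally show ?thesis .
    qed
    ultimately show "\<bar>g (\<xi> + s *\<^sub>R u + s *\<^sub>R v) - g (\<xi> + s *\<^sub>R u) - g (\<xi> + s *\<^sub>R v) + g \<xi>
        - s\<^sup>2 * frechet_derivative (\<lambda>x. Dg g x u) (at \<xi>) v\<bar> \<le> e * s\<^sup>2 * (2 * norm u + norm v)"
      unfolding L_def G_def by simp
  qed
qed

lemma schwarz:
  fixes g :: "'a::euclidean_space \<Rightarrow> real"
  assumes U: "open U" "\<xi> \<in> U" and dg: "\<forall>x\<in>U. g differentiable (at x)"
    and du: "(\<lambda>x. Dg g x u) differentiable (at \<xi>)"
    and dv: "(\<lambda>x. Dg g x v) differentiable (at \<xi>)"
  shows "frechet_derivative (\<lambda>x. Dg g x u) (at \<xi>) v = frechet_derivative (\<lambda>x. Dg g x v) (at \<xi>) u"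
proof (rule ccontr)
  define a where "a = frechet_derivative (\<lambda>x. Dg g x u) (at \<xi>) v"
  define b where "b = frechet_derivative (\<lambda>x. Dg g x v) (at \<xi>) u"
  assume "\<not> ?thesis"
  then have D: "\<bar>a - b\<bar> > 0" unfolding a_def b_def by simp
  define K where "K = 3 * (norm u + norm v) + 1"
  have K: "K > 0" unfolding K_def by (simp add: add_nonneg_pos)
  define e where "e = \<bar>a - b\<bar> / (2 * K)"
  have e: "e > 0" using D K unfolding e_def by simp
  obtain s0 where s0: "s0 > 0" "\<forall>s. 0 < s \<and> s < s0 \<longrightarrow>
     \<bar>g (\<xi> + s *\<^sub>R u + s *\<^sub>R v) - g (\<xi> + s *\<^sub>R u) - g (\<xi> + s *\<^sub>R v) + g \<xi> - s\<^sup>2 * a\<bar>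
      \<le> e * s\<^sup>2 * (2 * norm u + norm v)"
    using schwarz_aux[OF U dg du e, of v] unfolding a_def by blast
  obtain s1 where s1: "s1 > 0" "\<forall>s. 0 < s \<and> s < s1 \<longrightarrow>
     \<bar>g (\<xi> + s *\<^sub>R v + s *\<^sub>R u) - g (\<xi> + s *\<^sub>R v) - g (\<xi> + s *\<^sub>R u) + g \<xi> - s\<^sup>2 * b\<bar>
      \<le> e * s\<^sup>2 * (2 * norm v + norm u)"
    using schwarz_aux[OF U dg dv e, of u] unfolding b_def by blast
  define s where "s = min s0 s1 / 2"
  have s: "0 < s" "s < s0" "s < s1" using s0 s1 unfolding s_def by auto
  define Q where "Q = g (\<xi> + s *\<^sub>R u + s *\<^sub>R v) - g (\<xi> + s *\<^sub>R u) - g (\<xi> + s *\<^sub>R v) + g \<xi>"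
  have q0: "\<bar>Q - s\<^sup>2 * a\<bar> \<le> e * s\<^sup>2 * (2 * norm u + norm v)"
    using s0(2)[rule_format, of s] s unfolding Q_def by blast
  have q1: "\<bar>Q - s\<^sup>2 * b\<bar> \<le> e * s\<^sup>2 * (2 * norm v + norm u)"
    using s1(2)[rule_format, of s] s unfolding Q_def by (simp add: add.commute add.left_commute)
  have "s\<^sup>2 * \<bar>a - b\<bar> = \<bar>(Q - s\<^sup>2 * b) - (Q - s\<^sup>2 * a)\<bar>"
  proof -
    have "(Q - s\<^sup>2 * b) - (Q - s\<^sup>2 * a) = s\<^sup>2 * (a - b)" by (simp add: algebra_simps)
    then show ?thesis by (simp add: abs_mult)
  qed
  also have "\<dots> \<le> e * s\<^sup>2 * (2 * norm u + norm v) + e * s\<^sup>2 * (2 * norm v + norm u)"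
    using q0 q1 by linarith
  also have "\<dots> = s\<^sup>2 * (e * (K - 1))" unfolding K_def by (simp add: algebra_simps)
  also have "\<dots> < s\<^sup>2 * \<bar>a - b\<bar>"
  proof -
    have "e * (K - 1) < e * (2 * K)" using e K by simp
    also have "e * (2 * K) = \<bar>a - b\<bar>" unfolding e_def using K by simp
    finally show ?thesis using s by simp
  qed
  finally show False by simp
qed

lemma bil_lin:
  assumes "bilinear A"
  shows "A (x + y) z = A x z + A y z" "A z (x + y) = A z x + A z y"
    "A (c *\<^sub>R x) z = c * A x z" "A z (c *\<^sub>R x) = c * A z x"
proof -
  have l1: "linear (\<lambda>x. A x z)" and l2: "linear (A z)" using assms unfolding bilinear_def by auto
  show "A (x + y) z = A x z + A y z" using linear_add[OF l1, of x y] by simp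
  show "A z (x + y) = A z x + A z y" using linear_add[OF l2, of x y] by simp
  show "A (c *\<^sub>R x) z = c * A x z" using linear_scale[OF l1, of c x] by simp
  show "A z (c *\<^sub>R x) = c * A z x" using linear_scale[OF l2, of c x] by simp
qed

lemma spectral_step:
  fixes A :: "'a::euclidean_space \<Rightarrow> 'a \<Rightarrow> real"
  assumes bil: "bilinear A" and sym: "\<And>x y. A x y = A y x"
    and W: "subspace W" "W \<noteq> {0}"
  shows "\<exists>c\<in>W. norm c = 1 \<and> (\<forall>w\<in>W. c \<bullet> w = 0 \<longrightarrow> A c w = 0)"
proof -
  define S where "S = W \<inter> sphere 0 1"
  have "closed W" using closed_subspace W(1) by blast
  then have cS: "compact S" unfolding S_def using closed_Int_compact compact_sphere by blast
  have "\<exists>w\<in>W. w \<noteq> 0"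
  proof (rule ccontr)
    assume "\<not> ?thesis"
    then have "W \<subseteq> {0}" by auto
    moreover have "0 \<in> W" using subspace_0[OF W(1)] .
    ultimately show False using W(2) by auto
  qed
  then obtain w0 where w0: "w0 \<in> W" "w0 \<noteq> 0" by blast
  have "w0 /\<^sub>R norm w0 \<in> S" unfolding S_def using w0 W(1)
    by (simp add: subspace_scale)
  then have neS: "S \<noteq> {}" by blast
  have cont: "continuous_on S (\<lambda>x. A x x)"
    using bilinear_continuous_on_compose[OF continuous_on_id continuous_on_id bil] .
  obtain c where c: "c \<in> S" "\<forall>y\<in>S. A y y \<le> A c c"
    using continuous_attains_sup[OF cS neS cont] by blast
  have cW: "c \<in> W" and nc: "norm c = 1" using c unfolding S_def by auto
  have max: "A x x \<le> A c c * (norm x)\<^sup>2" if "x \<in> W" for x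
  proof (cases "x = 0")
    case True then show ?thesis using bilinear_lzero[OF bil] by simp
  next
    case False
    have "x /\<^sub>R norm x \<in> S" unfolding S_def using that False W(1) by (simp add: subspace_scale)
    then have "A (x /\<^sub>R norm x) (x /\<^sub>R norm x) \<le> A c c" using c by blast
    then have "A x x / (norm x)\<^sup>2 \<le> A c c"
      using bil_lin[OF bil] by (simp add: power2_eq_square divide_inverse mult_ac)
    then show ?thesis using False by (simp add: field_simps)
  qed
  have "A c w = 0" if w: "w \<in> W" "c \<bullet> w = 0" for w
  proof (rule ccontr)
    assume a: "A c w \<noteq> 0"
    define M where "M = A c c * (norm w)\<^sup>2 - A w w"
    define t where "t = A c w / (\<bar>M\<bar> + 1)"
    have "c + t *\<^sub>R w \<in> W" using w cW W(1) by (simp add: subspace_add subspace_scale)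
    then have m: "A (c + t *\<^sub>R w) (c + t *\<^sub>R w) \<le> A c c * (norm (c + t *\<^sub>R w))\<^sup>2" by (rule max)
    have n2: "(norm (c + t *\<^sub>R w))\<^sup>2 = 1 + t\<^sup>2 * (norm w)\<^sup>2"
    proof -
      have cc: "c \<bullet> c = 1" using nc by (simp add: norm_eq_1)
      have ww: "w \<bullet> w = (norm w)\<^sup>2" by (simp add: power2_norm_eq_inner)
      have "(norm (c + t *\<^sub>R w))\<^sup>2 = (c + t *\<^sub>R w) \<bullet> (c + t *\<^sub>R w)" by (rule power2_norm_eq_inner)
      also have "\<dots> = c \<bullet> c + 2 * t * (c \<bullet> w) + t\<^sup>2 * (w \<bullet> w)"
        by (simp add: inner_add_left inner_add_right inner_commute power2_eq_square algebra_simps)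
      finally show ?thesis using cc ww w(2) by simp
    qed
    have e: "A (c + t *\<^sub>R w) (c + t *\<^sub>R w) = A c c + 2 * t * A c w + t\<^sup>2 * A w w"
      using bil_lin[OF bil] sym[of w c] by (simp add: power2_eq_square algebra_simps)
    have ineq: "2 * t * A c w \<le> t\<^sup>2 * M" using m unfolding n2 e M_def by (simp add: algebra_simps)
    have pos: "\<bar>M\<bar> + 1 > 0" by simp
    have At: "A c w = t * (\<bar>M\<bar> + 1)" unfolding t_def using pos by simp
    have t0: "t \<noteq> 0" using a At by auto
    have "t\<^sup>2 * (2 * (\<bar>M\<bar> + 1)) \<le> t\<^sup>2 * M" using ineq unfolding At by (simp add: power2_eq_square algebra_simps)
    moreover have "t\<^sup>2 > 0" using t0 by simp
    ultimately have "2 * (\<bar>M\<bar> + 1) \<le> M" by simp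
    then show False by (smt (verit))
  qed
  then show ?thesis using cW nc by blast
qed

lemma spectral:
  fixes A :: "'a::euclidean_space \<Rightarrow> 'a \<Rightarrow> real"
  assumes bil: "bilinear A" and sym: "\<And>x y. A x y = A y x"
  shows "subspace W \<Longrightarrow> dim W = m \<Longrightarrow> \<exists>b. (\<forall>i<m. b i \<in> W) \<and>
      (\<forall>i<m. \<forall>j<m. b i \<bullet> b j = (if i = j then 1 else 0)) \<and>
      (\<forall>i<m. \<forall>j<m. i \<noteq> j \<longrightarrow> A (b i) (b j) = 0)"
proof (induction m arbitrary: W)
  case 0
  show ?case by (intro exI[of _ "\<lambda>i. 0"]) simp
next
  case (Suc m)
  have W0: "W \<noteq> {0}"
  proof
    assume "W = {0}"
    then have "dim W = 0" by simp
    then show False using Suc.prems by simp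
  qed
  obtain c where c: "c \<in> W" "norm c = 1" "\<forall>w\<in>W. c \<bullet> w = 0 \<longrightarrow> A c w = 0"
    using spectral_step[OF bil sym Suc.prems(1) W0] by blast
  have cc: "c \<bullet> c = 1" using c(2) by (simp add: norm_eq_1)
  define W' where "W' = {x\<in>W. c \<bullet> x = 0}"
  have sW': "subspace W'" using Suc.prems(1) unfolding W'_def subspace_def
    by (auto simp: inner_add_right)
  have "span (insert c W') = W"
  proof
    show "span (insert c W') \<subseteq> W"
      by (rule span_minimal) (use c(1) Suc.prems(1) in \<open>auto simp: W'_def\<close>)
    show "W \<subseteq> span (insert c W')"
    proof
      fix w assume w: "w \<in> W"
      have "w - (c \<bullet> w) *\<^sub>R c \<in> W'" unfolding W'_def using w c(1) Suc.prems(1) cc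
        by (auto simp: subspace_diff subspace_scale inner_diff_right)
      then have "w - (c \<bullet> w) *\<^sub>R c \<in> span (insert c W')" by (simp add: span_base)
      moreover have "(c \<bullet> w) *\<^sub>R c \<in> span (insert c W')" by (simp add: span_base span_scale)
      ultimately have "(w - (c \<bullet> w) *\<^sub>R c) + (c \<bullet> w) *\<^sub>R c \<in> span (insert c W')" by (rule span_add)
      then show "w \<in> span (insert c W')" by simp
    qed
  qed
  moreover have "c \<notin> span W'"
  proof -
    have sp: "span W' = W'" using sW' by simp
    have "c \<notin> W'" unfolding W'_def using cc by auto
    then show ?thesis by (metis sp)
  qed
  ultimately have "dim W = dim W' + 1"
  proof -
    assume sp: "span (insert c W') = W" and nc: "c \<notin> span W'"
    have "dim W = dim (span (insert c W'))" by (simp only: sp)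
    also have "\<dots> = dim (insert c W')" by (rule dim_span)
    also have "\<dots> = dim W' + 1" using nc by (simp add: dim_insert)
    finally show ?thesis .
  qed
  then have "dim W' = m" using Suc.prems(2) by simp
  from Suc.IH[OF sW' this] obtain b' where b'all: "(\<forall>i<m. b' i \<in> W') \<and>
      (\<forall>i<m. \<forall>j<m. b' i \<bullet> b' j = (if i = j then 1 else 0)) \<and>
      (\<forall>i<m. \<forall>j<m. i \<noteq> j \<longrightarrow> A (b' i) (b' j) = 0)"
    by (rule exE)
  note b' = conjunct1[OF b'all] conjunct1[OF conjunct2[OF b'all]] conjunct2[OF conjunct2[OF b'all]]
  define b where "b = (\<lambda>i. if i = 0 then c else b' (i - 1))"
  have bW: "\<forall>i<Suc m. b i \<in> W"
  proof (intro allI impI)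
    fix i assume "i < Suc m"
    then show "b i \<in> W" using b'(1) c(1) unfolding b_def W'_def by (cases "i = 0") auto
  qed
  have on: "\<forall>i<Suc m. \<forall>j<Suc m. b i \<bullet> b j = (if i = j then 1 else 0)"
  proof (intro allI impI)
    fix i j assume ij: "i < Suc m" "j < Suc m"
    show "b i \<bullet> b j = (if i = j then 1 else 0)"
    proof (cases "i = 0"; cases "j = 0")
      assume "i = 0" "j = 0" then show ?thesis using cc unfolding b_def by simp
    next
      assume "i = 0" "j \<noteq> 0"
      then have "b' (j - 1) \<in> W'" using b'(1) ij by simp
      then show ?thesis using \<open>i = 0\<close> \<open>j \<noteq> 0\<close> unfolding b_def W'_def by simp
    next
      assume "i \<noteq> 0" "j = 0"
      then have "b' (i - 1) \<in> W'" using b'(1) ij by simp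
      then show ?thesis using \<open>i \<noteq> 0\<close> \<open>j = 0\<close> unfolding b_def W'_def by (simp add: inner_commute)
    next
      assume "i \<noteq> 0" "j \<noteq> 0"
      then have "b' (i - 1) \<bullet> b' (j - 1) = (if i - 1 = j - 1 then 1 else 0)" using b'(2) ij by simp
      moreover have "(i - 1 = j - 1) = (i = j)" using \<open>i \<noteq> 0\<close> \<open>j \<noteq> 0\<close> by arith
      ultimately show ?thesis using \<open>i \<noteq> 0\<close> \<open>j \<noteq> 0\<close> unfolding b_def by simp
    qed
  qed
  have ao: "\<forall>i<Suc m. \<forall>j<Suc m. i \<noteq> j \<longrightarrow> A (b i) (b j) = 0"
  proof (intro allI impI)
    fix i j assume ij: "i < Suc m" "j < Suc m" "i \<noteq> j"
    show "A (b i) (b j) = 0"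
    proof (cases "i = 0"; cases "j = 0")
      assume "i = 0" "j = 0" then show ?thesis using ij by simp
    next
      assume "i = 0" "j \<noteq> 0"
      then have "b' (j - 1) \<in> W'" using b'(1) ij by simp
      then show ?thesis using \<open>i = 0\<close> \<open>j \<noteq> 0\<close> c(3) unfolding b_def W'_def by simp
    next
      assume "i \<noteq> 0" "j = 0"
      then have "b' (i - 1) \<in> W'" using b'(1) ij by simp
      then have "A c (b' (i - 1)) = 0" using c(3) unfolding W'_def by simp
      then have "A (b' (i - 1)) c = 0" using sym[of c "b' (i - 1)"] by simp
      then show ?thesis using \<open>i \<noteq> 0\<close> \<open>j = 0\<close> unfolding b_def by simp
    next
      assume "i \<noteq> 0" "j \<noteq> 0"
      moreover have "i - 1 \<noteq> j - 1" using \<open>i \<noteq> 0\<close> \<open>j \<noteq> 0\<close> ij by arith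
      ultimately have "A (b' (i - 1)) (b' (j - 1)) = 0" using b'(3) ij by simp
      then show ?thesis using \<open>i \<noteq> 0\<close> \<open>j \<noteq> 0\<close> unfolding b_def by simp
    qed
  qed
  show ?case using bW on ao by blast
qed

lemma comp_deriv:
  fixes F :: "'a::real_normed_vector \<Rightarrow> real"
  assumes F: "(F has_derivative DF) (at (\<gamma> t))" and g: "(\<gamma> has_vector_derivative V) (at t)"
  shows "((\<lambda>s. F (\<gamma> s)) has_real_derivative DF V) (at t)"
proof -
  have g': "(\<gamma> has_derivative (\<lambda>h. h *\<^sub>R V)) (at t)" using g by (simp add: has_vector_derivative_def)
  have lin: "linear DF" using F has_derivative_linear by blast
  have "((\<lambda>s. F (\<gamma> s)) has_derivative (\<lambda>h. DF (h *\<^sub>R V))) (at t)"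
    using has_derivative_compose[OF g' F] by simp
  moreover have "(\<lambda>h. DF (h *\<^sub>R V)) = (*) (DF V)"
    using linear_scale[OF lin] by (auto simp: mult.commute)
  ultimately show ?thesis by (simp add: has_field_derivative_def)
qed

lemma deriv_min_right:
  fixes \<phi> :: "real \<Rightarrow> real"
  assumes "(\<phi> has_real_derivative D) (at 0)" "\<delta> > 0" "\<forall>t. 0 \<le> t \<and> t < \<delta> \<longrightarrow> \<phi> 0 \<le> \<phi> t"
  shows "D \<ge> 0"
proof (rule ccontr)
  assume "\<not> D \<ge> 0"
  then obtain d where d: "d > 0" "\<forall>h>0. h < d \<longrightarrow> \<phi> (0 + h) < \<phi> 0"
    using DERIV_neg_dec_right[OF assms(1)] by force
  define t where "t = min d \<delta> / 2"
  have t: "t > 0" "t < d" "t < \<delta>" using d assms(2) unfolding t_def by auto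
  have "\<phi> t < \<phi> 0" using d(2) t by simp
  moreover have "\<phi> 0 \<le> \<phi> t" using assms(3) t by simp
  ultimately show False by simp
qed

lemma deriv_max_right:
  fixes \<phi> :: "real \<Rightarrow> real"
  assumes "(\<phi> has_real_derivative D) (at 0)" "\<delta> > 0" "\<forall>t. 0 \<le> t \<and> t < \<delta> \<longrightarrow> \<phi> t \<le> \<phi> 0"
  shows "D \<le> 0"
proof (rule ccontr)
  assume "\<not> D \<le> 0"
  then obtain d where d: "d > 0" "\<forall>h>0. h < d \<longrightarrow> \<phi> 0 < \<phi> (0 + h)"
    using DERIV_pos_inc_right[OF assms(1)] by force
  define t where "t = min d \<delta> / 2"
  have t: "t > 0" "t < d" "t < \<delta>" using d assms(2) unfolding t_def by auto
  have "\<phi> 0 < \<phi> t" using d(2) t by simp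
  moreover have "\<phi> t \<le> \<phi> 0" using assms(3) t by simp
  ultimately show False by simp
qed

lemma gam_comp_deriv0:
  fixes F :: "'a::euclidean_space \<Rightarrow> real"
  assumes "F differentiable (at \<xi>)"
  shows "((\<lambda>t. F (gam \<theta> \<xi> u t)) has_real_derivative Dg F \<xi> u) (at 0)"
proof -
  have F: "(F has_derivative Dg F \<xi>) (at (gam \<theta> \<xi> u 0))"
    using assms frechet_derivative_works gam_0 by metis
  show ?thesis using comp_deriv[OF F gam_deriv[of \<theta> \<xi> u 0]] by simp
qed

lemma second_order:
  fixes g :: "'a::euclidean_space \<Rightarrow> real"
  assumes U: "open U" "\<xi> \<in> U" and dg: "\<forall>x\<in>U. g differentiable (at x)"
   and du: "(\<lambda>x. Dg g x u) differentiable (at \<xi>)"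
   and dN: "(\<lambda>x. Dg g x (\<xi> - capc \<theta>)) differentiable (at \<xi>)"
   and min: "\<delta> > 0" "\<forall>t. 0 \<le> t \<and> t < \<delta> \<longrightarrow> g \<xi> \<le> g (gam \<theta> \<xi> u t)"
   and crit: "Dg g \<xi> u = 0"
  shows "frechet_derivative (\<lambda>x. Dg g x u) (at \<xi>) u - Dg g \<xi> (\<xi> - capc \<theta>) \<ge> 0"
proof (rule ccontr)
  define N where "N = \<xi> - capc \<theta>"
  define \<gamma> where "\<gamma> = gam \<theta> \<xi> u"
  define L where "L = frechet_derivative (\<lambda>x. Dg g x u) (at \<xi>) u - Dg g \<xi> N"
  assume "\<not> ?thesis"
  then have L: "L < 0" unfolding L_def N_def by simp
  obtain \<epsilon> where \<epsilon>: "\<epsilon> > 0" "\<forall>t. \<bar>t\<bar> < \<epsilon> \<longrightarrow> \<gamma> t \<in> U"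
    using near0[of \<gamma> U] gam_cont U gam_0 unfolding \<gamma>_def by metis
  define \<phi> where "\<phi> = (\<lambda>t. g (\<gamma> t))"
  define \<psi> where "\<psi> = (\<lambda>t. - sin t * Dg g (\<gamma> t) N + cos t * Dg g (\<gamma> t) u)"
  have dphi: "(\<phi> has_real_derivative \<psi> t) (at t)" if "\<bar>t\<bar> < \<epsilon>" for t
  proof -
    have "g differentiable (at (\<gamma> t))" using dg \<epsilon> that by blast
    then have F: "(g has_derivative Dg g (\<gamma> t)) (at (\<gamma> t))" using frechet_derivative_works by blast
    have lin: "linear (Dg g (\<gamma> t))" using F has_derivative_linear by blast
    have V: "(\<gamma> has_vector_derivative (- sin t *\<^sub>R N + cos t *\<^sub>R u)) (at t)"
      unfolding \<gamma>_def N_def by (rule gam_deriv)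
    have "(\<phi> has_real_derivative Dg g (\<gamma> t) (- sin t *\<^sub>R N + cos t *\<^sub>R u)) (at t)"
      unfolding \<phi>_def by (rule comp_deriv[of g "Dg g (\<gamma> t)" \<gamma> t, OF F V])
    moreover have "Dg g (\<gamma> t) (- sin t *\<^sub>R N + cos t *\<^sub>R u) = \<psi> t"
      unfolding \<psi>_def using linear_add[OF lin] linear_diff[OF lin] linear_scale[OF lin] by simp
    ultimately show ?thesis by simp
  qed
  have A: "((\<lambda>t. Dg g (\<gamma> t) N) has_real_derivative frechet_derivative (\<lambda>x. Dg g x N) (at \<xi>) u) (at 0)"
    using gam_comp_deriv0[OF dN[folded N_def], of \<theta> u] unfolding \<gamma>_def by simp
  have B: "((\<lambda>t. Dg g (\<gamma> t) u) has_real_derivative frechet_derivative (\<lambda>x. Dg g x u) (at \<xi>) u) (at 0)"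
    using gam_comp_deriv0[OF du, of \<theta> u] unfolding \<gamma>_def by simp
  have "(\<psi> has_real_derivative (- cos 0 * Dg g (\<gamma> 0) N + frechet_derivative (\<lambda>x. Dg g x N) (at \<xi>) u * - sin 0
      + (- sin 0 * Dg g (\<gamma> 0) u + frechet_derivative (\<lambda>x. Dg g x u) (at \<xi>) u * cos 0))) (at 0)"
    unfolding \<psi>_def by (intro DERIV_add DERIV_mult DERIV_minus DERIV_sin DERIV_cos A B)
  then have dpsi: "(\<psi> has_real_derivative L) (at 0)" unfolding L_def \<gamma>_def gam_0 by simp
  have psi0: "\<psi> 0 = 0" unfolding \<psi>_def \<gamma>_def gam_0 using crit by simp
  obtain d where d: "d > 0" "\<forall>h>0. h < d \<longrightarrow> \<psi> (0 + h) < \<psi> 0"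
    using DERIV_neg_dec_right[OF dpsi L] by blast
  define t where "t = min (min d \<delta>) \<epsilon> / 2"
  have t: "0 < t" "t < d" "t < \<delta>" "t < \<epsilon>" using d min \<epsilon> unfolding t_def by auto
  obtain z where z: "0 < z" "z < t" "\<phi> t - \<phi> 0 = (t - 0) * \<psi> z"
    using MVT2[of 0 t \<phi> \<psi>] dphi t by force
  have "\<psi> z < 0" using d(2)[rule_format, of z] z t psi0 by simp
  then have "t * \<psi> z < 0" using mult_pos_neg[OF t(1)] by blast
  then have "\<phi> t < \<phi> 0" using z(3) by simp
  moreover have "\<phi> 0 \<le> \<phi> t" using min(2) t unfolding \<phi>_def \<gamma>_def gam_0 by simp
  ultimately show False by simp
qed

lemma cap_ext_props:
  assumes "smooth_on_cap \<theta> h"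
  shows "\<exists>U. open U \<and> cap \<theta> \<subseteq> U \<and> smooth_on U (cap_ext \<theta> h) \<and> (\<forall>x\<in>cap \<theta>. cap_ext \<theta> h x = h x)"
proof -
  have ex: "\<exists>g. \<exists>U. open U \<and> cap \<theta> \<subseteq> U \<and> smooth_on U g \<and> (\<forall>x\<in>cap \<theta>. g x = h x)"
    using assms unfolding smooth_on_cap_def by blast
  show ?thesis unfolding cap_ext_def by (rule someI_ex[OF ex])
qed

lemma smooth_diff:
  assumes "smooth_on U g" "open U" "x \<in> U"
  shows "dd g vs differentiable (at x)"
  using assms unfolding smooth_on_def by (simp add: differentiable_on_eq_differentiable_at)

lemma smooth_diff0:
  assumes "smooth_on U g" "open U" "x \<in> U"
  shows "g differentiable (at x)"
  using smooth_diff[OF assms, of "[]"] by simp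

lemma smooth_diff1:
  assumes "smooth_on U g" "open U" "x \<in> U"
  shows "(\<lambda>x. Dg g x v) differentiable (at x)"
  using smooth_diff[OF assms, of "[v]"] by simp

lemma sph_form_eq:
  "sph_form \<theta> h \<xi> u v = frechet_derivative (\<lambda>x. Dg (cap_ext \<theta> h) x v) (at \<xi>) u
     - Dg (cap_ext \<theta> h) \<xi> (\<xi> - capc \<theta>) * (u \<bullet> v) + h \<xi> * (u \<bullet> v)"
  unfolding sph_form_def Let_def by simp

lemma sph_sym:
  assumes "smooth_on U (cap_ext \<theta> h)" "open U" "\<xi> \<in> U"
  shows "sph_form \<theta> h \<xi> u v = sph_form \<theta> h \<xi> v u"
proof -
  have dg: "\<forall>x\<in>U. cap_ext \<theta> h differentiable (at x)" using smooth_diff0[OF assms(1,2)] by blast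
  have "frechet_derivative (\<lambda>x. Dg (cap_ext \<theta> h) x u) (at \<xi>) v = frechet_derivative (\<lambda>x. Dg (cap_ext \<theta> h) x v) (at \<xi>) u"
    by (rule schwarz[OF assms(2,3) dg smooth_diff1[OF assms] smooth_diff1[OF assms]])
  then show ?thesis unfolding sph_form_eq by (simp add: inner_commute)
qed

lemma sph_lin1:
  assumes "smooth_on U (cap_ext \<theta> h)" "open U" "\<xi> \<in> U"
  shows "linear (\<lambda>u. sph_form \<theta> h \<xi> u v)"
proof -
  have lin: "linear (frechet_derivative (\<lambda>x. Dg (cap_ext \<theta> h) x v) (at \<xi>))"
    by (rule linear_frechet_derivative[OF smooth_diff1[OF assms]])
  show ?thesis unfolding sph_form_eq
    by (rule linearI) (simp_all add: linear_add[OF lin] linear_scale[OF lin] inner_add_left algebra_simps)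
qed

lemma sph_bil:
  assumes "smooth_on U (cap_ext \<theta> h)" "open U" "\<xi> \<in> U"
  shows "bilinear (sph_form \<theta> h \<xi>)"
  unfolding bilinear_def
proof (intro conjI allI)
  fix v show "linear (\<lambda>u. sph_form \<theta> h \<xi> u v)" by (rule sph_lin1[OF assms])
next
  fix u
  have "(\<lambda>v. sph_form \<theta> h \<xi> u v) = (\<lambda>v. sph_form \<theta> h \<xi> v u)" using sph_sym[OF assms] by blast
  then show "linear (sph_form \<theta> h \<xi> u)" using sph_lin1[OF assms, of u] by simp
qed

definition good :: "real \<Rightarrow> 'a::euclidean_space \<Rightarrow> 'a \<Rightarrow> bool" where
  "good \<theta> \<xi> u \<longleftrightarrow> \<xi> \<bullet> capE < 0 \<or> u \<bullet> capE < 0 \<or> (cos \<theta> = 0 \<and> u \<bullet> capE \<le> 0)"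

lemma tang_sub: "subspace (tang \<theta> \<xi>)"
  unfolding tang_def subspace_def by (auto simp: inner_add_left)

lemma tang_neg: "u \<in> tang \<theta> \<xi> \<Longrightarrow> - u \<in> tang \<theta> \<xi>"
  unfolding tang_def by simp

lemma tang_scale: "u \<in> tang \<theta> \<xi> \<Longrightarrow> c *\<^sub>R u \<in> tang \<theta> \<xi>"
  unfolding tang_def by simp

lemma tang_diff: "u \<in> tang \<theta> \<xi> \<Longrightarrow> v \<in> tang \<theta> \<xi> \<Longrightarrow> u - v \<in> tang \<theta> \<xi>"
  unfolding tang_def by (simp add: inner_diff_left)

lemma min_hess:
  fixes \<xi>0 :: "'a::euclidean_space"
  assumes th: "0 < \<theta>" "\<theta> \<le> pi/2" and sm: "smooth_on_cap \<theta> h" and pos: "\<forall>\<xi>\<in>cap \<theta>. h \<xi> > 0"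
   and nb: "neumann_bc \<theta> h" and xi: "\<xi>0 \<in> cap \<theta>" and mn: "\<forall>\<xi>\<in>cap \<theta>. h \<xi>0 \<le> h \<xi>"
  shows "\<forall>u\<in>tang \<theta> \<xi>0. norm u = 1 \<longrightarrow> h \<xi>0 \<le> sph_form \<theta> h \<xi>0 u u"
proof -
  define g where "g = cap_ext \<theta> h"
  obtain U where U: "open U" "cap \<theta> \<subseteq> U" "smooth_on U g" "\<forall>x\<in>cap \<theta>. g x = h x"
    using cap_ext_props[OF sm] unfolding g_def by blast
  have xU: "\<xi>0 \<in> U" using U xi by blast
  have dg: "\<forall>x\<in>U. g differentiable (at x)" using smooth_diff0[OF U(3,1)] by blast
  have dg0: "g differentiable (at \<xi>0)" using dg xU by blast
  have lin0: "linear (Dg g \<xi>0)" using linear_frechet_derivative[OF dg0] .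
  define N where "N = \<xi>0 - capc \<theta>"
  have NN: "N \<bullet> N = 1" using cap_N(2)[OF xi] unfolding N_def .
  have Ne: "N \<bullet> capE = \<xi>0 \<bullet> capE - cos \<theta>" using cap_N(4)[OF xi] unfolding N_def .
  have ee: "(capE::'a) \<bullet> capE = 1" using capE_props by simp
  have mg: "g \<xi>0 \<le> g y" if "y \<in> cap \<theta>" for y using mn U(4) xi that by simp
  have fo: "Dg g \<xi>0 u \<ge> 0" if u: "u \<in> tang \<theta> \<xi>0" "norm u = 1" "good \<theta> \<xi>0 u" for u
  proof -
    obtain \<delta> where \<delta>: "\<delta> > 0" "\<forall>t. 0 \<le> t \<and> t < \<delta> \<longrightarrow> gam \<theta> \<xi>0 u t \<in> cap \<theta>"
      using good_dir[OF xi u(1,2)] u(3) unfolding good_def by blast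
    have "\<forall>t. 0 \<le> t \<and> t < \<delta> \<longrightarrow> g (gam \<theta> \<xi>0 u 0) \<le> g (gam \<theta> \<xi>0 u t)"
      using \<delta>(2) mg unfolding gam_0 by blast
    then show ?thesis using deriv_min_right[OF gam_comp_deriv0[OF dg0] \<delta>(1)] by blast
  qed
  have so: "h \<xi>0 \<le> sph_form \<theta> h \<xi>0 u u"
    if u: "u \<in> tang \<theta> \<xi>0" "norm u = 1" "good \<theta> \<xi>0 u" "Dg g \<xi>0 u = 0" for u
  proof -
    obtain \<delta> where \<delta>: "\<delta> > 0" "\<forall>t. 0 \<le> t \<and> t < \<delta> \<longrightarrow> gam \<theta> \<xi>0 u t \<in> cap \<theta>"
      using good_dir[OF xi u(1,2)] u(3) unfolding good_def by blast
    have m: "\<forall>t. 0 \<le> t \<and> t < \<delta> \<longrightarrow> g \<xi>0 \<le> g (gam \<theta> \<xi>0 u t)"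
      using \<delta>(2) mg by blast
    have "frechet_derivative (\<lambda>x. Dg g x u) (at \<xi>0) u - Dg g \<xi>0 (\<xi>0 - capc \<theta>) \<ge> 0"
      by (rule second_order[OF U(1) xU dg smooth_diff1[OF U(3,1) xU] smooth_diff1[OF U(3,1) xU] \<delta>(1) m u(4)])
    moreover have "u \<bullet> u = 1" using u(2) by (simp add: norm_eq_1)
    ultimately show ?thesis unfolding sph_form_eq g_def[symmetric] by simp
  qed
  have e0: "\<xi>0 \<bullet> capE \<le> 0" using cap_N(3)[OF xi] .
  show ?thesis
  proof (cases "\<xi>0 \<bullet> capE < 0")
    case True
    show ?thesis
    proof (intro ballI impI)
      fix u assume u: "u \<in> tang \<theta> \<xi>0" "norm u = 1"
      have "Dg g \<xi>0 u \<ge> 0" using fo[OF u] True unfolding good_def by blast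
      moreover have "Dg g \<xi>0 (- u) \<ge> 0" using fo[OF tang_neg[OF u(1)]] u(2) True unfolding good_def by simp
      ultimately have "Dg g \<xi>0 u = 0" using linear_neg[OF lin0, of u] by simp
      then show "h \<xi>0 \<le> sph_form \<theta> h \<xi>0 u u" using so[OF u] True unfolding good_def by blast
    qed
  next
    case False
    then have b: "\<xi>0 \<bullet> capE = 0" using e0 by simp
    have wdef: "conormal \<theta> \<xi>0 = (capE + cos \<theta> *\<^sub>R N) /\<^sub>R norm (capE + cos \<theta> *\<^sub>R N)"
      unfolding conormal_def Let_def N_def[symmetric] using Ne b by (simp add: inner_commute)
    have NB: "Dg g \<xi>0 (conormal \<theta> \<xi>0) = cot \<theta> * h \<xi>0"
      using nb xi b unfolding neumann_bc_def g_def by simp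
    define w where "w = capE + cos \<theta> *\<^sub>R N"
    have wT: "w \<in> tang \<theta> \<xi>0"
    proof -
      have "w \<bullet> N = capE \<bullet> N + cos \<theta> * (N \<bullet> N)" unfolding w_def by (simp add: inner_add_left)
      also have "\<dots> = 0" using Ne b NN by (simp add: inner_commute)
      finally show ?thesis unfolding tang_def N_def by simp
    qed
    have we: "w \<bullet> capE = 1 - (cos \<theta>)\<^sup>2" unfolding w_def using Ne b ee
      by (simp add: inner_add_left power2_eq_square)
    show ?thesis
    proof (cases "\<theta> = pi / 2")
      case False
      then have "\<theta> < pi / 2" using th by simp
      then have c: "cos \<theta> > 0" "sin \<theta> > 0" using th by (auto intro!: cos_gt_zero sin_gt_zero)
      have "(cos \<theta>)\<^sup>2 < 1"
      proof -
        have "(sin \<theta>)\<^sup>2 > 0" using c by simp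
        then show ?thesis using sin_cos_squared_add[of \<theta>] by linarith
      qed
      then have wep: "w \<bullet> capE > 0" using we by simp
      then have w0: "w \<noteq> 0" by auto
      then have nw: "norm w > 0" by simp
      define \<mu> where "\<mu> = w /\<^sub>R norm w"
      have muT: "- \<mu> \<in> tang \<theta> \<xi>0" unfolding \<mu>_def using wT by (intro tang_neg tang_scale)
      have mun: "norm (- \<mu>) = 1" unfolding \<mu>_def using w0 by simp
      have "- \<mu> \<bullet> capE < 0" unfolding \<mu>_def using wep nw by simp
      then have "Dg g \<xi>0 (- \<mu>) \<ge> 0" using fo[OF muT mun] unfolding good_def by blast
      then have "Dg g \<xi>0 \<mu> \<le> 0" using linear_neg[OF lin0, of \<mu>] by simp
      moreover have "Dg g \<xi>0 \<mu> = cot \<theta> * h \<xi>0"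
        using NB unfolding wdef \<mu>_def w_def by simp
      moreover have "cot \<theta> * h \<xi>0 > 0" using c pos xi by (simp add: cot_def)
      ultimately show ?thesis by simp
    next
      case True
      then have c0: "cos \<theta> = 0" by (simp only: cos_pi_half)
      have weq: "w = capE" unfolding w_def using c0 by simp
      have eT: "capE \<in> tang \<theta> \<xi>0" using wT weq by simp
      have conE: "conormal \<theta> \<xi>0 = capE" using wdef c0 by (simp add: capE_props(1))
      have De: "Dg g \<xi>0 capE = 0"
        using NB unfolding conE using c0 by (simp add: cot_def)
      have Dz: "Dg g \<xi>0 z = 0" if z: "z \<in> tang \<theta> \<xi>0" for z
      proof -
        define z' where "z' = z - (z \<bullet> capE) *\<^sub>R capE"
        have z'T: "z' \<in> tang \<theta> \<xi>0" unfolding z'_def by (intro tang_diff z tang_scale eT)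
        have z'e: "z' \<bullet> capE = 0" unfolding z'_def using ee by (simp add: inner_diff_left)
        have "Dg g \<xi>0 z' = 0"
        proof (cases "z' = 0")
          case True then show ?thesis using linear_0[OF lin0] by simp
        next
          case False
          define y where "y = z' /\<^sub>R norm z'"
          have yT: "y \<in> tang \<theta> \<xi>0" "- y \<in> tang \<theta> \<xi>0" unfolding y_def using z'T by (auto intro: tang_neg tang_scale)
          have yn: "norm y = 1" "norm (- y) = 1" unfolding y_def using False by auto
          have ye: "y \<bullet> capE = 0" unfolding y_def using z'e by simp
          have "Dg g \<xi>0 y \<ge> 0" using fo[OF yT(1) yn(1)] ye c0 unfolding good_def by simp
          moreover have "Dg g \<xi>0 (- y) \<ge> 0" using fo[OF yT(2) yn(2)] ye c0 unfolding good_def by simp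
          ultimately have "Dg g \<xi>0 y = 0" using linear_neg[OF lin0, of y] by simp
          then have "Dg g \<xi>0 (norm z' *\<^sub>R y) = 0" using linear_scale[OF lin0] by simp
          moreover have "norm z' *\<^sub>R y = z'" unfolding y_def using False by simp
          ultimately show ?thesis by simp
        qed
        note z'0 = this
        have zeq: "z = z' + (z \<bullet> capE) *\<^sub>R capE" unfolding z'_def by simp
        have "Dg g \<xi>0 z = Dg g \<xi>0 (z' + (z \<bullet> capE) *\<^sub>R capE)" using zeq by (rule arg_cong)
        also have "\<dots> = Dg g \<xi>0 z' + Dg g \<xi>0 ((z \<bullet> capE) *\<^sub>R capE)" by (rule linear_add[OF lin0])
        also have "\<dots> = Dg g \<xi>0 z' + (z \<bullet> capE) * Dg g \<xi>0 capE" using linear_scale[OF lin0] by simp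
        finally show ?thesis using z'0 De by simp
      qed
      show ?thesis
      proof (intro ballI impI)
        fix u assume u: "u \<in> tang \<theta> \<xi>0" "norm u = 1"
        define s where "s = (if u \<bullet> capE \<le> 0 then u else - u)"
        have sT: "s \<in> tang \<theta> \<xi>0" unfolding s_def using u tang_neg by auto
        have sn: "norm s = 1" unfolding s_def using u by auto
        have sg: "good \<theta> \<xi>0 s" unfolding good_def s_def using c0 by auto
        have "h \<xi>0 \<le> sph_form \<theta> h \<xi>0 s s" using so[OF sT sn sg Dz[OF sT]] .
        moreover have "sph_form \<theta> h \<xi>0 s s = sph_form \<theta> h \<xi>0 u u"
        proof -
          have bil: "bilinear (sph_form \<theta> h \<xi>0)" using sph_bil[OF U(3)[unfolded g_def] U(1) xU] .
          have "sph_form \<theta> h \<xi>0 (- u) (- u) = sph_form \<theta> h \<xi>0 ((-1) *\<^sub>R u) ((-1) *\<^sub>R u)" by simp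
          also have "\<dots> = (-1) * ((-1) * sph_form \<theta> h \<xi>0 u u)" by (simp only: bil_lin(3)[OF bil] bil_lin(4)[OF bil])
          also have "\<dots> = sph_form \<theta> h \<xi>0 u u" by simp
          finally have "sph_form \<theta> h \<xi>0 (- u) (- u) = sph_form \<theta> h \<xi>0 u u" .
          then show ?thesis unfolding s_def by simp
        qed
        ultimately show "h \<xi>0 \<le> sph_form \<theta> h \<xi>0 u u" by simp
      qed
    qed
  qed
qed

definition ondiag :: "nat \<Rightarrow> 'a::euclidean_space set \<Rightarrow> ('a \<Rightarrow> 'a \<Rightarrow> real) \<Rightarrow> (nat \<Rightarrow> 'a) \<Rightarrow> (nat \<Rightarrow> real) \<Rightarrow> bool" where
  "ondiag n T A b lam \<longleftrightarrow> (\<forall>i<n. b i \<in> T) \<and>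
      (\<forall>i<n. \<forall>j<n. b i \<bullet> b j = (if i = j then 1 else 0)) \<and>
      (\<forall>i<n. \<forall>j<n. A (b i) (b j) = (if i = j then lam i else 0))"

definition esym :: "nat \<Rightarrow> (nat \<Rightarrow> real) \<Rightarrow> nat \<Rightarrow> real" where
  "esym m lam n = (\<Sum>S\<in>{S. S \<subseteq> {..<n} \<and> card S = m}. \<Prod>i\<in>S. lam i)"

lemma ondiag_inj:
  assumes "ondiag n T A b lam" shows "inj_on b {..<n}"
proof (rule inj_onI)
  fix i j assume ij: "i \<in> {..<n}" "j \<in> {..<n}" "b i = b j"
  then have "b i \<bullet> b j = 1" using assms unfolding ondiag_def by simp
  then show "i = j" using assms ij unfolding ondiag_def by (metis lessThan_iff zero_neq_one)
qed

lemma ondiag_indep: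
  assumes "ondiag n T A b lam" "J \<subseteq> {..<n}" shows "independent (b ` J)"
proof (rule pairwise_orthogonal_independent)
  have bb: "\<forall>i<n. \<forall>j<n. b i \<bullet> b j = (if i = j then 1 else 0)" using assms unfolding ondiag_def by blast
  show "pairwise orthogonal (b ` J)"
    unfolding pairwise_def orthogonal_def
  proof (intro ballI impI)
    fix x y assume xy: "x \<in> b ` J" "y \<in> b ` J" "x \<noteq> y"
    then obtain i j where ij: "i \<in> J" "j \<in> J" "x = b i" "y = b j" by blast
    then have "i \<noteq> j" "i < n" "j < n" using xy assms(2) by auto
    then show "x \<bullet> y = 0" using ij bb by simp
  qed
  show "0 \<notin> b ` J"
  proof
    assume "0 \<in> b ` J"
    then obtain i where i: "i \<in> J" "b i = 0" by auto
    then have "i < n" using assms(2) by auto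
    then have "b i \<bullet> b i = 1" using bb by simp
    then show False using i(2) by simp
  qed
qed

lemma ondiag_expand:
  assumes od: "ondiag n T A b lam" and T: "subspace T" "dim T = n" and w: "w \<in> T"
  shows "w = (\<Sum>i<n. (w \<bullet> b i) *\<^sub>R b i)"
proof (rule ccontr)
  assume ne: "w \<noteq> (\<Sum>i<n. (w \<bullet> b i) *\<^sub>R b i)"
  define r where "r = w - (\<Sum>i<n. (w \<bullet> b i) *\<^sub>R b i)"
  have r0: "r \<noteq> 0" using ne unfolding r_def by simp
  have bT: "\<forall>i<n. b i \<in> T" using od unfolding ondiag_def by blast
  have bb: "\<forall>i<n. \<forall>j<n. b i \<bullet> b j = (if i = j then 1 else 0)" using od unfolding ondiag_def by blast
  have rT: "r \<in> T" unfolding r_def using T(1) w bT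
    by (intro subspace_diff subspace_sum subspace_scale) auto
  have rb: "r \<bullet> b j = 0" if "j < n" for j
  proof -
    have "(\<Sum>i<n. (w \<bullet> b i) *\<^sub>R b i) \<bullet> b j = (\<Sum>i<n. (w \<bullet> b i) * (b i \<bullet> b j))"
      by (simp add: inner_sum_left)
    also have "\<dots> = (\<Sum>i<n. if i = j then w \<bullet> b i else 0)"
      by (rule sum.cong) (use bb that in auto)
    also have "\<dots> = w \<bullet> b j" using that by simp
    finally show ?thesis unfolding r_def by (simp add: inner_diff_left)
  qed
  define q where "q = r /\<^sub>R norm r"
  have "norm q = 1" unfolding q_def using r0 by simp
  then have qq: "q \<bullet> q = 1" by (simp add: norm_eq_1)
  have qb: "q \<bullet> b j = 0" if "j < n" for j unfolding q_def using rb[OF that] by simp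
  have qT: "q \<in> T" unfolding q_def using rT T(1) by (simp add: subspace_scale)
  have qnot: "q \<notin> b ` {..<n}"
  proof
    assume "q \<in> b ` {..<n}"
    then obtain j where "j < n" "q = b j" by auto
    then show False using qb[of j] qq by simp
  qed
  define S where "S = insert q (b ` {..<n})"
  have "pairwise orthogonal S" unfolding S_def pairwise_def orthogonal_def
  proof (intro ballI impI)
    fix x y assume xy: "x \<in> insert q (b ` {..<n})" "y \<in> insert q (b ` {..<n})" "x \<noteq> y"
    show "x \<bullet> y = 0"
    proof (cases "x = q")
      case True
      then have "y \<in> b ` {..<n}" using xy by auto
      then show ?thesis using True qb by auto
    next
      case False
      then obtain i where i: "i < n" "x = b i" using xy by auto
      show ?thesis
      proof (cases "y = q")
        case True then show ?thesis using i qb[of i] by (simp add: inner_commute)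
      next
        case False
        then obtain j where j: "j < n" "y = b j" using xy by auto
        then have "i \<noteq> j" using i xy by auto
        then show ?thesis using i j bb by simp
      qed
    qed
  qed
  moreover have "0 \<notin> S"
  proof
    assume "0 \<in> S"
    then consider "q = 0" | i where "i < n" "b i = 0" unfolding S_def by auto
    then show False
    proof cases
      case 1 then show False using qq by simp
    next
      case 2 then show False using bb[rule_format, of i i] by simp
    qed
  qed
  ultimately have ind: "independent S" by (rule pairwise_orthogonal_independent)
  have ST: "S \<subseteq> T" unfolding S_def using qT bT by auto
  have "card S \<le> n" using independent_card_le_dim[OF ST ind] T(2) by simp
  moreover have "card S = n + 1" unfolding S_def using qnot card_image[OF ondiag_inj[OF od]] by simp
  ultimately show False by simp
qed

lemma ondiag_A:
  assumes od: "ondiag n T A b lam" and bil: "bilinear A" and T: "subspace T" "dim T = n"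
    and u: "u \<in> T" and j: "j < n"
  shows "A u (b j) = (u \<bullet> b j) * lam j"
proof -
  have lin: "linear (\<lambda>x. A x (b j))" using bil unfolding bilinear_def by blast
  have bA: "\<forall>i<n. \<forall>j<n. A (b i) (b j) = (if i = j then lam i else 0)" using od unfolding ondiag_def by blast
  have "A u (b j) = A (\<Sum>i<n. (u \<bullet> b i) *\<^sub>R b i) (b j)"
    using ondiag_expand[OF od T u] by (rule arg_cong)
  also have "\<dots> = (\<Sum>i<n. A ((u \<bullet> b i) *\<^sub>R b i) (b j))" using linear_sum[OF lin] by simp
  also have "\<dots> = (\<Sum>i<n. (u \<bullet> b i) * A (b i) (b j))" using bil_lin(3)[OF bil] by simp
  also have "\<dots> = (\<Sum>i<n. if i = j then (u \<bullet> b i) * lam i else 0)"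
    by (rule sum.cong) (use bA j in auto)
  also have "\<dots> = (u \<bullet> b j) * lam j" using j by simp
  finally show ?thesis .
qed

definition eigsp :: "'a::euclidean_space set \<Rightarrow> ('a \<Rightarrow> 'a \<Rightarrow> real) \<Rightarrow> real \<Rightarrow> 'a set" where
  "eigsp T A c = {u\<in>T. \<forall>w\<in>T. A u w = c * (u \<bullet> w)}"

lemma eigsp_eq:
  assumes od: "ondiag n T A b lam" and bil: "bilinear A" and sym: "\<And>x y. A x y = A y x"
    and T: "subspace T" "dim T = n"
  shows "eigsp T A c = span (b ` {j. j < n \<and> lam j = c})"
proof
  have bT: "\<forall>i<n. b i \<in> T" using od unfolding ondiag_def by blast
  show "eigsp T A c \<subseteq> span (b ` {j. j < n \<and> lam j = c})"
  proof
    fix u assume "u \<in> eigsp T A c"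
    then have u: "u \<in> T" "\<forall>w\<in>T. A u w = c * (u \<bullet> w)" unfolding eigsp_def by auto
    have z: "u \<bullet> b j = 0" if "j < n" "lam j \<noteq> c" for j
    proof -
      have "(u \<bullet> b j) * lam j = c * (u \<bullet> b j)"
        using ondiag_A[OF od bil T u(1) that(1)] u(2) bT that(1) by auto
      then show ?thesis using that(2) by (simp add: algebra_simps)
    qed
    have "u = (\<Sum>i<n. (u \<bullet> b i) *\<^sub>R b i)" by (rule ondiag_expand[OF od T u(1)])
    also have "\<dots> \<in> span (b ` {j. j < n \<and> lam j = c})"
    proof (rule span_sum)
      fix i assume "i \<in> {..<n}"
      then show "(u \<bullet> b i) *\<^sub>R b i \<in> span (b ` {j. j < n \<and> lam j = c})"
        using z[of i] by (cases "lam i = c") (auto intro: span_scale span_base span_zero)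
    qed
    finally show "u \<in> span (b ` {j. j < n \<and> lam j = c})" .
  qed
  show "span (b ` {j. j < n \<and> lam j = c}) \<subseteq> eigsp T A c"
  proof (rule span_minimal)
    show "b ` {j. j < n \<and> lam j = c} \<subseteq> eigsp T A c"
    proof
      fix x assume "x \<in> b ` {j. j < n \<and> lam j = c}"
      then obtain j where j: "j < n" "lam j = c" "x = b j" by blast
      have "\<forall>w\<in>T. A x w = c * (x \<bullet> w)"
      proof
        fix w assume w: "w \<in> T"
        have "A x w = A w (b j)" using sym j(3) by simp
        also have "\<dots> = (w \<bullet> b j) * lam j" by (rule ondiag_A[OF od bil T w j(1)])
        finally show "A x w = c * (x \<bullet> w)" using j by (simp add: inner_commute)
      qed
      then show "x \<in> eigsp T A c" unfolding eigsp_def using bT j by simp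
    qed
    show "subspace (eigsp T A c)" unfolding subspace_def eigsp_def
      using T(1) bil_lin[OF bil] by (simp add: subspace_add subspace_scale subspace_0 bilinear_lzero[OF bil] inner_add_left algebra_simps)
  qed
qed

lemma eig_count:
  assumes od: "ondiag n T A b lam" and bil: "bilinear A" and sym: "\<And>x y. A x y = A y x"
    and T: "subspace T" "dim T = n"
  shows "dim (eigsp T A c) = card {j. j < n \<and> lam j = c}"
proof -
  have sub: "{j. j < n \<and> lam j = c} \<subseteq> {..<n}" by auto
  have "dim (eigsp T A c) = card (b ` {j. j < n \<and> lam j = c})"
    unfolding eigsp_eq[OF od bil sym T] by (rule dim_span_eq_card_independent[OF ondiag_indep[OF od sub]])
  also have "\<dots> = card {j. j < n \<and> lam j = c}"
    by (rule card_image) (use inj_on_subset[OF ondiag_inj[OF od] sub] in auto)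
  finally show ?thesis .
qed

lemma prod_count:
  fixes F :: "real \<Rightarrow> real" and n :: nat and l :: "nat \<Rightarrow> real"
  shows "(\<Prod>i<n. F (l i)) = (\<Prod>c\<in>l ` {..<n}. F c ^ card {j. j < n \<and> l j = c})"
proof -
  have "(\<Prod>i<n. F (l i)) = (\<Prod>c\<in>l ` {..<n}. \<Prod>x\<in>{x. x \<in> {..<n} \<and> l x = c}. F (l x))"
    by (rule prod.image_gen) simp
  also have "\<dots> = (\<Prod>c\<in>l ` {..<n}. F c ^ card {j. j < n \<and> l j = c})"
  proof (rule prod.cong[OF refl])
    fix c
    have "(\<Prod>x\<in>{x. x \<in> {..<n} \<and> l x = c}. F (l x)) = (\<Prod>x\<in>{j. j < n \<and> l j = c}. F c)"
      by (rule prod.cong) auto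
    also have "\<dots> = F c ^ card {j. j < n \<and> l j = c}" by simp
    finally show "(\<Prod>x\<in>{x. x \<in> {..<n} \<and> l x = c}. F (l x)) = F c ^ card {j. j < n \<and> l j = c}" .
  qed
  finally show ?thesis .
qed

lemma prod_eq_counts:
  fixes F :: "real \<Rightarrow> real" and n :: nat and l1 l2 :: "nat \<Rightarrow> real"
  assumes "\<forall>c. card {j. j < n \<and> l1 j = c} = card {j. j < n \<and> l2 j = c}"
  shows "(\<Prod>i<n. F (l1 i)) = (\<Prod>i<n. F (l2 i))"
proof -
  have im: "c \<in> l ` {..<n} \<longleftrightarrow> card {j. j < n \<and> l j = c} > 0" for l :: "nat \<Rightarrow> real" and c
  proof -
    have fin: "finite {j. j < n \<and> l j = c}" by simp
    have "c \<in> l ` {..<n} \<longleftrightarrow> {j. j < n \<and> l j = c} \<noteq> {}" by auto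
    also have "\<dots> \<longleftrightarrow> card {j. j < n \<and> l j = c} > 0" using fin by (simp add: card_gt_0_iff)
    finally show ?thesis .
  qed
  have "l1 ` {..<n} = l2 ` {..<n}"
  proof (intro set_eqI)
    fix c show "c \<in> l1 ` {..<n} \<longleftrightarrow> c \<in> l2 ` {..<n}" using im[of c l1] im[of c l2] assms by simp
  qed
  then show ?thesis unfolding prod_count[of F l1] prod_count[of F l2] using assms by simp
qed

lemma prod_expand:
  "(\<Prod>i<n. 1 + t * l i) = (\<Sum>m\<le>n. esym m l n * t ^ m)"
proof -
  have "(\<Prod>i<n. 1 + t * l i) = (\<Prod>i<n. t * l i + 1)" by (simp add: add.commute)
  also have "\<dots> = (\<Sum>X\<in>Pow {..<n}. (\<Prod>i\<in>X. t * l i) * (\<Prod>i\<in>{..<n}-X. 1))"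
    by (rule prod_add) simp
  also have "\<dots> = (\<Sum>X\<in>Pow {..<n}. t ^ card X * (\<Prod>i\<in>X. l i))"
    by (simp add: prod.distrib)
  also have "\<dots> = (\<Sum>m\<le>n. \<Sum>X\<in>{X. X \<in> Pow {..<n} \<and> card X = m}. t ^ card X * (\<Prod>i\<in>X. l i))"
  proof (rule sum.group[symmetric])
    show "finite (Pow {..<n})" by simp
    show "finite {..n}" by simp
    show "card ` Pow {..<n} \<subseteq> {..n}"
    proof
      fix m assume "m \<in> card ` Pow {..<n}"
      then obtain X where "X \<subseteq> {..<n}" "m = card X" by auto
      then have "m \<le> card {..<n}" using card_mono[of "{..<n}" X] by simp
      then show "m \<in> {..n}" by simp
    qed
  qed
  also have "\<dots> = (\<Sum>m\<le>n. esym m l n * t ^ m)"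
  proof (rule sum.cong[OF refl])
    fix m
    have "(\<Sum>X\<in>{X. X \<in> Pow {..<n} \<and> card X = m}. t ^ card X * (\<Prod>i\<in>X. l i))
        = (\<Sum>X\<in>{S. S \<subseteq> {..<n} \<and> card S = m}. t ^ m * (\<Prod>i\<in>X. l i))"
      by (rule sum.cong) auto
    also have "\<dots> = esym m l n * t ^ m" unfolding esym_def by (simp add: sum_distrib_left mult.commute)
    finally show "(\<Sum>X\<in>{X. X \<in> Pow {..<n} \<and> card X = m}. t ^ card X * (\<Prod>i\<in>X. l i)) = esym m l n * t ^ m" .
  qed
  finally show ?thesis .
qed

lemma esym_unique:
  assumes od1: "ondiag n T A b1 l1" and od2: "ondiag n T A b2 l2"
    and bil: "bilinear A" and sym: "\<And>x y. A x y = A y x" and T: "subspace T" "dim T = n"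
    and m: "m \<le> n"
  shows "esym m l1 n = esym m l2 n"
proof -
  have cnt: "\<forall>c. card {j. j < n \<and> l1 j = c} = card {j. j < n \<and> l2 j = c}"
    using eig_count[OF od1 bil sym T] eig_count[OF od2 bil sym T] by metis
  have "\<forall>t. (\<Sum>m\<le>n. esym m l1 n * t ^ m) = (\<Sum>m\<le>n. esym m l2 n * t ^ m)"
  proof
    fix t :: real
    show "(\<Sum>m\<le>n. esym m l1 n * t ^ m) = (\<Sum>m\<le>n. esym m l2 n * t ^ m)"
      using prod_eq_counts[OF cnt, of "\<lambda>x. 1 + t * x"] unfolding prod_expand .
  qed
  then show ?thesis using m unfolding polyfun_eq_coeffs by blast
qed

lemma tang_dim:
  assumes "\<xi> \<in> cap \<theta>"
  shows "dim (tang \<theta> (\<xi>::'a::euclidean_space)) = DIM('a) - 1"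
proof -
  have N0: "\<xi> - capc \<theta> \<noteq> 0" using cap_N(1)[OF assms] by auto
  have "tang \<theta> \<xi> = {x. (\<xi> - capc \<theta>) \<bullet> x = 0}" unfolding tang_def by (simp add: inner_commute)
  then show ?thesis using dim_hyperplane[OF N0] by simp
qed

lemma sigma_cap_val:
  fixes \<xi> :: "'a::euclidean_space"
  assumes U: "smooth_on U (cap_ext \<theta> h)" "open U" "\<xi> \<in> U" and xi: "\<xi> \<in> cap \<theta>"
    and od: "ondiag (DIM('a) - 1) (tang \<theta> \<xi>) (sph_form \<theta> h \<xi>) b lam"
    and m: "m \<le> DIM('a) - 1"
  shows "sigma_cap \<theta> h m \<xi> = esym m lam (DIM('a) - 1)"
proof -
  define n where "n = DIM('a) - 1"
  define P where "P = (\<lambda>s. \<exists>b lam.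
      (\<forall>i<n. b i \<in> tang \<theta> \<xi>) \<and>
      (\<forall>i<n. \<forall>j<n. b i \<bullet> b j = (if i = j then 1 else 0)) \<and>
      (\<forall>i<n. \<forall>j<n. sph_form \<theta> h \<xi> (b i) (b j) = (if i = j then lam i else 0)) \<and>
      s = (\<Sum>S\<in>{S. S \<subseteq> {..<n} \<and> card S = m}. \<Prod>i\<in>S. lam i))"
  have sc: "sigma_cap \<theta> h m \<xi> = (SOME s. P s)" unfolding sigma_cap_def sigma_form_def P_def n_def ..
  have "P (esym m lam n)" unfolding P_def esym_def using od unfolding ondiag_def n_def by blast
  then have "P (SOME s. P s)" by (rule someI)
  then obtain b' lam' where od': "ondiag n (tang \<theta> \<xi>) (sph_form \<theta> h \<xi>) b' lam'"
      and eq: "(SOME s. P s) = esym m lam' n"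
    unfolding P_def ondiag_def esym_def by blast
  have "esym m lam' n = esym m lam n"
    by (rule esym_unique[OF od'[unfolded n_def] od sph_bil[OF U] sph_sym[OF U] tang_sub tang_dim[OF xi] m, folded n_def])
  then show ?thesis using sc eq n_def by simp
qed

lemma sigma_bound:
  fixes lam :: "nat \<Rightarrow> real"
  assumes lam: "\<forall>i<n. a \<le> lam i" and a: "a > 0" and k: "k \<le> n"
  shows "esym (n - k) lam n * a ^ k \<le> 2 ^ n * esym n lam n"
proof -
  have fam: "{S. S \<subseteq> {..<n} \<and> card S = n} = {{..<n}}"
  proof (intro set_eqI iffI)
    fix S assume "S \<in> {S. S \<subseteq> {..<n} \<and> card S = n}"
    then have "S \<subseteq> {..<n}" "card S = card {..<n}" by auto
    then have "S = {..<n}" using card_subset_eq[of "{..<n}" S] by simp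
    then show "S \<in> {{..<n}}" by simp
  qed auto
  define P where "P = (\<Prod>i<n. lam i)"
  have en: "esym n lam n = P" unfolding esym_def fam P_def by simp
  have lpos: "\<forall>i<n. lam i > 0" using lam a by force
  have P0: "P \<ge> 0" unfolding P_def by (rule prod_nonneg) (use lpos in \<open>auto simp: less_imp_le\<close>)
  have trm: "(\<Prod>i\<in>S. lam i) * a ^ k \<le> P" if S: "S \<subseteq> {..<n}" "card S = n - k" for S
  proof -
    have cD: "card ({..<n} - S) = k" using S k by (simp add: card_Diff_subset finite_subset)
    have "a ^ k = (\<Prod>i\<in>{..<n} - S. a)" using cD by simp
    also have "\<dots> \<le> (\<Prod>i\<in>{..<n} - S. lam i)"
      by (rule prod_mono) (use lam a in auto)
    finally have ak: "a ^ k \<le> (\<Prod>i\<in>{..<n} - S. lam i)" .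
    have nn: "(\<Prod>i\<in>S. lam i) \<ge> 0" using lpos S by (intro prod_nonneg) (auto simp: less_imp_le)
    have "(\<Prod>i\<in>S. lam i) * a ^ k \<le> (\<Prod>i\<in>S. lam i) * (\<Prod>i\<in>{..<n} - S. lam i)"
      by (rule mult_left_mono[OF ak nn])
    also have "\<dots> = P" unfolding P_def using prod.subset_diff[OF S(1), of lam] by (simp add: mult.commute)
    finally show ?thesis .
  qed
  define F where "F = {S. S \<subseteq> {..<n} \<and> card S = n - k}"
  have "esym (n - k) lam n * a ^ k = (\<Sum>S\<in>F. (\<Prod>i\<in>S. lam i) * a ^ k)"
    unfolding esym_def F_def by (simp add: sum_distrib_right)
  also have "\<dots> \<le> of_nat (card F) * P"
    by (rule sum_bounded_above) (use trm in \<open>auto simp: F_def\<close>)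
  also have "\<dots> \<le> 2 ^ n * P"
  proof (rule mult_right_mono[OF _ P0])
    have "F \<subseteq> Pow {..<n}" unfolding F_def by auto
    then have "card F \<le> card (Pow {..<n})" by (intro card_mono) auto
    also have "\<dots> = 2 ^ n" by (simp add: card_Pow)
    finally show "real (card F) \<le> 2 ^ n" by (metis of_nat_le_iff of_nat_numeral of_nat_power)
  qed
  finally show ?thesis using en by simp
qed

lemma part1:
  fixes f h :: "'a::euclidean_space \<Rightarrow> real" and \<xi>0 :: 'a
  assumes th: "0 < \<theta>" "\<theta> \<le> pi/2" and k: "1 \<le> k" "k \<le> DIM('a) - 2"
    and fm: "fm > 0" "\<forall>\<xi>\<in>cap \<theta>. fm \<le> f \<xi>"
    and sm: "smooth_on_cap \<theta> h" and pos: "\<forall>\<xi>\<in>cap \<theta>. h \<xi> > 0"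
    and eq: "\<forall>\<xi>\<in>cap \<theta>. sigma_cap \<theta> h (DIM('a) - 1) \<xi> / sigma_cap \<theta> h (DIM('a) - 1 - k) \<xi> = inverse (f \<xi>)"
    and nb: "neumann_bc \<theta> h"
    and xi: "\<xi>0 \<in> cap \<theta>" and mn: "\<forall>\<xi>\<in>cap \<theta>. h \<xi>0 \<le> h \<xi>"
  shows "h \<xi>0 \<le> max 1 (2 ^ (DIM('a) - 1) / fm)"
proof -
  define n where "n = DIM('a) - 1"
  define T where "T = tang \<theta> \<xi>0"
  define A where "A = sph_form \<theta> h \<xi>0"
  obtain U where U: "open U" "cap \<theta> \<subseteq> U" "smooth_on U (cap_ext \<theta> h)"
    using cap_ext_props[OF sm] by blast
  have xU: "\<xi>0 \<in> U" using U xi by blast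
  have bil: "bilinear A" unfolding A_def by (rule sph_bil[OF U(3,1) xU])
  have sym: "\<And>x y. A x y = A y x" unfolding A_def by (rule sph_sym[OF U(3,1) xU])
  have sT: "subspace T" unfolding T_def by (rule tang_sub)
  have dT: "dim T = n" unfolding T_def n_def by (rule tang_dim[OF xi])
  from spectral[OF bil sym sT dT] obtain b where ball: "(\<forall>i<n. b i \<in> T) \<and> (\<forall>i<n. \<forall>j<n. b i \<bullet> b j = (if i = j then 1 else 0)) \<and>
      (\<forall>i<n. \<forall>j<n. i \<noteq> j \<longrightarrow> A (b i) (b j) = 0)"
    by (rule exE)
  note b = conjunct1[OF ball] conjunct1[OF conjunct2[OF ball]] conjunct2[OF conjunct2[OF ball]]
  define lam where "lam = (\<lambda>i. A (b i) (b i))"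
  have "\<forall>i<n. \<forall>j<n. A (b i) (b j) = (if i = j then lam i else 0)"
  proof (intro allI impI)
    fix i j assume "i < n" "j < n"
    then show "A (b i) (b j) = (if i = j then lam i else 0)" using b(3) unfolding lam_def by (cases "i = j") auto
  qed
  then have od: "ondiag n T A b lam" unfolding ondiag_def using b(1,2) by blast
  have hess: "\<forall>u\<in>T. norm u = 1 \<longrightarrow> h \<xi>0 \<le> A u u"
    unfolding T_def A_def by (rule min_hess[OF th sm pos nb xi mn])
  have lam_ge: "\<forall>i<n. h \<xi>0 \<le> lam i"
  proof (intro allI impI)
    fix i assume i: "i < n"
    have "b i \<bullet> b i = 1" using b(2) i by simp
    then have "norm (b i) = 1" by (simp add: norm_eq_1)
    then show "h \<xi>0 \<le> lam i" using hess b(1) i unfolding lam_def by blast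
  qed
  have a: "h \<xi>0 > 0" using pos xi by blast
  have kn: "k \<le> n" using k unfolding n_def by simp
  have s1: "sigma_cap \<theta> h n \<xi>0 = esym n lam n"
    unfolding n_def by (rule sigma_cap_val[OF U(3,1) xU xi od[unfolded n_def T_def A_def]]) simp
  have s2: "sigma_cap \<theta> h (n - k) \<xi>0 = esym (n - k) lam n"
    unfolding n_def by (rule sigma_cap_val[OF U(3,1) xU xi od[unfolded n_def T_def A_def]]) simp
  define P where "P = esym n lam n"
  define Q where "Q = esym (n - k) lam n"
  have "sigma_cap \<theta> h n \<xi>0 / sigma_cap \<theta> h (n - k) \<xi>0 = inverse (f \<xi>0)"
    using eq xi unfolding n_def by blast
  then have ratio: "P / Q = inverse (f \<xi>0)" unfolding s1 s2 P_def Q_def .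
  have f0: "f \<xi>0 > 0" using fm(2) xi fm(1) by (meson less_le_trans)
  have bound: "Q * (h \<xi>0) ^ k \<le> 2 ^ n * P" unfolding P_def Q_def by (rule sigma_bound[OF lam_ge a kn])
  have lp: "\<And>i. i < n \<Longrightarrow> 0 \<le> lam i" using lam_ge a by (meson less_imp_le order_trans)
  have Q0: "Q \<ge> 0" unfolding Q_def esym_def
  proof (intro sum_nonneg prod_nonneg)
    fix S i assume "S \<in> {S. S \<subseteq> {..<n} \<and> card S = n - k}" "i \<in> S"
    then have "i < n" by auto
    then show "0 \<le> lam i" by (rule lp)
  qed
  have Qn: "Q \<noteq> 0"
  proof
    assume "Q = 0"
    then have "inverse (f \<xi>0) = 0" using ratio by simp
    then show False using f0 by simp
  qed
  then have Qp: "Q > 0" using Q0 by simp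
  have PQ: "P = Q / f \<xi>0" using ratio Qp f0 by (simp add: field_simps)
  have "Q * (h \<xi>0) ^ k \<le> Q * (2 ^ n / f \<xi>0)" using bound PQ by (simp add: field_simps)
  then have hk: "(h \<xi>0) ^ k \<le> 2 ^ n / f \<xi>0" using Qp mult_le_cancel_left_pos by blast
  also have "\<dots> \<le> 2 ^ n / fm" using fm xi f0 by (intro divide_left_mono) auto
  finally have hk2: "(h \<xi>0) ^ k \<le> 2 ^ n / fm" .
  show ?thesis
  proof (cases "h \<xi>0 \<le> 1")
    case True then show ?thesis by simp
  next
    case False
    then have "h \<xi>0 ^ 1 \<le> h \<xi>0 ^ k" using k by (intro power_increasing) auto
    then show ?thesis using hk2 unfolding n_def by simp
  qed
qed

definition gX :: "real \<Rightarrow> ('a::euclidean_space \<Rightarrow> 'a) \<Rightarrow> 'a \<Rightarrow> 'a \<Rightarrow> real" where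
  "gX \<theta> X b = cap_ext \<theta> (\<lambda>x. X x \<bullet> b)"

lemma X_nbhd:
  fixes X :: "'a::euclidean_space \<Rightarrow> 'a"
  assumes "\<forall>b\<in>(Basis::'a set). smooth_on_cap \<theta> (\<lambda>x. X x \<bullet> b)"
  shows "\<exists>UX. open UX \<and> cap \<theta> \<subseteq> UX \<and> (\<forall>b\<in>Basis. \<forall>x\<in>UX. gX \<theta> X b differentiable (at x))
     \<and> (\<forall>b\<in>Basis. \<forall>x\<in>cap \<theta>. gX \<theta> X b x = X x \<bullet> b)"
proof -
  have "\<forall>b\<in>(Basis::'a set). \<exists>U. open U \<and> cap \<theta> \<subseteq> U \<and> smooth_on U (gX \<theta> X b) \<and> (\<forall>x\<in>cap \<theta>. gX \<theta> X b x = X x \<bullet> b)"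
    using assms cap_ext_props unfolding gX_def by blast
  then obtain Uf where Uf: "\<forall>b\<in>(Basis::'a set). open (Uf b) \<and> cap \<theta> \<subseteq> Uf b \<and> smooth_on (Uf b) (gX \<theta> X b) \<and> (\<forall>x\<in>cap \<theta>. gX \<theta> X b x = X x \<bullet> b)"
    by (rule bchoice[THEN exE]) blast
  define UX where "UX = (\<Inter>b\<in>(Basis::'a set). Uf b)"
  have "open UX" unfolding UX_def using Uf by (intro open_INT) auto
  moreover have "cap \<theta> \<subseteq> UX" unfolding UX_def using Uf by blast
  moreover have "\<forall>b\<in>Basis. \<forall>x\<in>UX. gX \<theta> X b differentiable (at x)"
  proof (intro ballI)
    fix b x assume b: "b \<in> (Basis::'a set)" and x: "x \<in> UX"
    then have "x \<in> Uf b" unfolding UX_def by blast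
    then show "gX \<theta> X b differentiable (at x)" using smooth_diff0 Uf b by blast
  qed
  moreover have "\<forall>b\<in>Basis. \<forall>x\<in>cap \<theta>. gX \<theta> X b x = X x \<bullet> b" using Uf by blast
  ultimately show ?thesis by blast
qed

lemma vdiff_eq: "vdiff \<theta> X x w = (\<Sum>b\<in>Basis. Dg (gX \<theta> X b) x w *\<^sub>R b)"
  unfolding vdiff_def gX_def by simp

lemma X_deriv:
  assumes d: "\<forall>b\<in>Basis. gX \<theta> X b differentiable (at x)"
  shows "((\<lambda>x. \<Sum>b\<in>Basis. (y \<bullet> b) * gX \<theta> X b x) has_derivative (\<lambda>w. y \<bullet> vdiff \<theta> X x w)) (at x)"
proof -
  have "((\<lambda>x. \<Sum>b\<in>Basis. (y \<bullet> b) * gX \<theta> X b x) has_derivative (\<lambda>w. \<Sum>b\<in>Basis. (y \<bullet> b) * Dg (gX \<theta> X b) x w)) (at x)"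
  proof (rule has_derivative_sum)
    fix b assume "b \<in> (Basis::'a set)"
    then have "(gX \<theta> X b has_derivative Dg (gX \<theta> X b) x) (at x)" using d frechet_derivative_works by blast
    then show "((\<lambda>x. (y \<bullet> b) * gX \<theta> X b x) has_derivative (\<lambda>w. (y \<bullet> b) * Dg (gX \<theta> X b) x w)) (at x)"
      by (rule has_derivative_mult_right)
  qed
  moreover have "(\<lambda>w. \<Sum>b\<in>Basis. (y \<bullet> b) * Dg (gX \<theta> X b) x w) = (\<lambda>w. y \<bullet> vdiff \<theta> X x w)"
    unfolding vdiff_eq by (simp add: inner_sum_right mult.commute)
  ultimately show ?thesis by simp
qed

lemma X_on_cap:
  assumes "\<forall>b\<in>Basis. gX \<theta> X b x = X x \<bullet> b"
  shows "(\<Sum>b\<in>Basis. (y \<bullet> b) * gX \<theta> X b x) = y \<bullet> X x"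
  using assms by (simp add: euclidean_inner[of y "X x"] mult.commute)

lemma vdiff_lin:
  assumes d: "\<forall>b\<in>Basis. gX \<theta> X b differentiable (at x)"
  shows "linear (vdiff \<theta> X x)"
proof -
  have lin: "\<And>b. b \<in> Basis \<Longrightarrow> linear (Dg (gX \<theta> X b) x)" using d linear_frechet_derivative by blast
  show ?thesis unfolding vdiff_eq[abs_def]
  proof (rule linearI)
    fix u w
    show "(\<Sum>b\<in>Basis. Dg (gX \<theta> X b) x (u + w) *\<^sub>R b) = (\<Sum>b\<in>Basis. Dg (gX \<theta> X b) x u *\<^sub>R b) + (\<Sum>b\<in>Basis. Dg (gX \<theta> X b) x w *\<^sub>R b)"
      by (simp add: linear_add[OF lin] scaleR_add_left sum.distrib)
  next
    fix r u
    show "(\<Sum>b\<in>Basis. Dg (gX \<theta> X b) x (r *\<^sub>R u) *\<^sub>R b) = r *\<^sub>R (\<Sum>b\<in>Basis. Dg (gX \<theta> X b) x u *\<^sub>R b)"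
      by (simp add: linear_scale[OF lin] scaleR_sum_right)
  qed
qed

definition Xok :: "real \<Rightarrow> ('a::euclidean_space \<Rightarrow> 'a) \<Rightarrow> 'a set \<Rightarrow> bool" where
  "Xok \<theta> X UX \<longleftrightarrow> open UX \<and> cap \<theta> \<subseteq> UX \<and> (\<forall>b\<in>Basis. \<forall>x\<in>UX. gX \<theta> X b differentiable (at x))
     \<and> (\<forall>b\<in>Basis. \<forall>x\<in>cap \<theta>. gX \<theta> X b x = X x \<bullet> b)"

lemma Xok_lin: "Xok \<theta> X UX \<Longrightarrow> x \<in> cap \<theta> \<Longrightarrow> linear (vdiff \<theta> X x)"
  unfolding Xok_def by (intro vdiff_lin) blast

lemma max_first:
  assumes ok: "Xok \<theta> X UX" and eta: "\<eta> \<in> cap \<theta>" and mx: "\<forall>x\<in>cap \<theta>. y \<bullet> X x \<le> y \<bullet> X \<eta>"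
    and u: "u \<in> tang \<theta> \<eta>" "norm u = 1" "good \<theta> \<eta> u"
  shows "y \<bullet> vdiff \<theta> X \<eta> u \<le> 0"
proof -
  obtain \<delta> where \<delta>: "\<delta> > 0" "\<forall>t. 0 \<le> t \<and> t < \<delta> \<longrightarrow> gam \<theta> \<eta> u t \<in> cap \<theta>"
    using good_dir[OF eta u(1,2)] u(3) unfolding good_def by blast
  define F where "F = (\<lambda>x. \<Sum>b\<in>Basis. (y \<bullet> b) * gX \<theta> X b x)"
  have d: "\<forall>b\<in>Basis. gX \<theta> X b differentiable (at \<eta>)" using ok eta unfolding Xok_def by blast
  have Fc: "\<And>x. x \<in> cap \<theta> \<Longrightarrow> F x = y \<bullet> X x" unfolding F_def
    by (rule X_on_cap) (use ok in \<open>auto simp: Xok_def\<close>)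
  have FD: "(F has_derivative (\<lambda>w. y \<bullet> vdiff \<theta> X \<eta> w)) (at (gam \<theta> \<eta> u 0))"
    unfolding F_def gam_0 by (rule X_deriv[OF d])
  have "((\<lambda>t. F (gam \<theta> \<eta> u t)) has_real_derivative y \<bullet> vdiff \<theta> X \<eta> (- sin 0 *\<^sub>R (\<eta> - capc \<theta>) + cos 0 *\<^sub>R u)) (at 0)"
    by (rule comp_deriv[OF FD gam_deriv])
  then have D: "((\<lambda>t. F (gam \<theta> \<eta> u t)) has_real_derivative y \<bullet> vdiff \<theta> X \<eta> u) (at 0)" by simp
  have "\<forall>t. 0 \<le> t \<and> t < \<delta> \<longrightarrow> F (gam \<theta> \<eta> u t) \<le> F (gam \<theta> \<eta> u 0)"
    using \<delta>(2) mx Fc eta unfolding gam_0 by simp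
  then show ?thesis using deriv_max_right[OF D \<delta>(1)] by blast
qed

lemma max_first_gen:
  assumes ok: "Xok \<theta> X UX" and eta: "\<eta> \<in> cap \<theta>" and mx: "\<forall>x\<in>cap \<theta>. y \<bullet> X x \<le> y \<bullet> X \<eta>"
    and u: "u \<in> tang \<theta> \<eta>" "u \<noteq> 0" "good \<theta> \<eta> (u /\<^sub>R norm u)"
  shows "y \<bullet> vdiff \<theta> X \<eta> u \<le> 0"
proof -
  have lin: "linear (vdiff \<theta> X \<eta>)" by (rule Xok_lin[OF ok eta])
  have "y \<bullet> vdiff \<theta> X \<eta> (u /\<^sub>R norm u) \<le> 0"
    by (rule max_first[OF ok eta mx]) (use u in \<open>auto intro: tang_scale\<close>)
  then have "(y \<bullet> vdiff \<theta> X \<eta> u) / norm u \<le> 0" using linear_scale[OF lin] by (simp add: divide_inverse mult.commute)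
  then show ?thesis using u(2) by (simp add: divide_le_0_iff)
qed

lemma posdef_zero:
  assumes cp: "capillary_param \<theta> X" and ok: "Xok \<theta> X UX" and eta: "\<eta> \<in> cap \<theta>"
    and z: "\<forall>u\<in>tang \<theta> \<eta>. z \<bullet> vdiff \<theta> X \<eta> u = 0"
  shows "z = (z \<bullet> (\<eta> - capc \<theta>)) *\<^sub>R (\<eta> - capc \<theta>)"
proof (rule ccontr)
  define N where "N = \<eta> - capc \<theta>"
  assume "\<not> ?thesis"
  then have ne: "z - (z \<bullet> N) *\<^sub>R N \<noteq> 0" unfolding N_def by simp
  define zT where "zT = z - (z \<bullet> N) *\<^sub>R N"
  have NN: "N \<bullet> N = 1" using cap_N(2)[OF eta] unfolding N_def .
  have "zT \<bullet> N = z \<bullet> N - (z \<bullet> N) * (N \<bullet> N)" unfolding zT_def by (simp add: inner_diff_left)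
  then have "zT \<bullet> N = 0" using NN by simp
  then have zT: "zT \<in> tang \<theta> \<eta>" unfolding tang_def N_def by simp
  have lin: "linear (vdiff \<theta> X \<eta>)" by (rule Xok_lin[OF ok eta])
  have tangL: "vdiff \<theta> X \<eta> zT \<bullet> N = 0" using cp eta zT unfolding capillary_param_def N_def by blast
  have pos: "zT \<bullet> vdiff \<theta> X \<eta> zT > 0" using cp eta zT ne unfolding capillary_param_def zT_def by blast
  have "z \<bullet> vdiff \<theta> X \<eta> zT = zT \<bullet> vdiff \<theta> X \<eta> zT + (z \<bullet> N) * (N \<bullet> vdiff \<theta> X \<eta> zT)"
    unfolding zT_def by (simp add: inner_diff_left)
  also have "\<dots> = zT \<bullet> vdiff \<theta> X \<eta> zT" using tangL by (simp add: inner_commute)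
  finally have "z \<bullet> vdiff \<theta> X \<eta> zT > 0" using pos by simp
  then show False using z zT by simp
qed

lemma interior_zero:
  assumes ok: "Xok \<theta> X UX" and eta: "\<eta> \<in> cap \<theta>" "\<eta> \<bullet> capE < 0"
    and mx: "\<forall>x\<in>cap \<theta>. y \<bullet> X x \<le> y \<bullet> X \<eta>"
  shows "\<forall>u\<in>tang \<theta> \<eta>. y \<bullet> vdiff \<theta> X \<eta> u = 0"
proof
  fix u assume u: "u \<in> tang \<theta> \<eta>"
  have lin: "linear (vdiff \<theta> X \<eta>)" by (rule Xok_lin[OF ok eta(1)])
  show "y \<bullet> vdiff \<theta> X \<eta> u = 0"
  proof (cases "u = 0")
    case True then show ?thesis using linear_0[OF lin] by simp
  next
    case False
    have "y \<bullet> vdiff \<theta> X \<eta> u \<le> 0"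
      by (rule max_first_gen[OF ok eta(1) mx u False]) (use eta(2) in \<open>simp add: good_def\<close>)
    moreover have "y \<bullet> vdiff \<theta> X \<eta> (- u) \<le> 0"
      by (rule max_first_gen[OF ok eta(1) mx tang_neg[OF u]]) (use eta(2) False in \<open>auto simp: good_def\<close>)
    ultimately show ?thesis using linear_neg[OF lin, of u] by simp
  qed
qed

lemma good_of_neg:
  assumes "u \<bullet> capE < 0" shows "good \<theta> \<eta> (u /\<^sub>R norm u)"
proof -
  have "u \<noteq> 0" using assms by auto
  then have n: "norm u > 0" by simp
  have "(u /\<^sub>R norm u) \<bullet> capE = (u \<bullet> capE) / norm u" by (simp add: divide_inverse mult.commute)
  also have "\<dots> < 0" using assms n by (simp add: divide_neg_pos)
  finally show ?thesis unfolding good_def by simp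
qed

lemma sin_pos_th: "0 < \<theta> \<Longrightarrow> \<theta> \<le> pi/2 \<Longrightarrow> sin \<theta> > 0"
  by (rule sin_gt_zero) auto

lemma boundary_first:
  fixes \<eta> :: "'a::euclidean_space"
  assumes ok: "Xok \<theta> X UX" and th: "0 < \<theta>" "\<theta> \<le> pi/2" and eta: "\<eta> \<in> cap \<theta>" "\<eta> \<bullet> capE = 0"
    and mx: "\<forall>x\<in>cap \<theta>. y \<bullet> X x \<le> y \<bullet> X \<eta>"
  shows "\<forall>z\<in>tang \<theta> \<eta>. z \<bullet> capE = 0 \<longrightarrow> y \<bullet> vdiff \<theta> X \<eta> z = 0"
    and "y \<bullet> vdiff \<theta> X \<eta> (capE + cos \<theta> *\<^sub>R (\<eta> - capc \<theta>)) \<ge> 0"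
proof -
  define N where "N = \<eta> - capc \<theta>"
  define w where "w = capE + cos \<theta> *\<^sub>R N"
  define L where "L = vdiff \<theta> X \<eta>"
  have lin: "linear L" unfolding L_def by (rule Xok_lin[OF ok eta(1)])
  have NN: "N \<bullet> N = 1" using cap_N(2)[OF eta(1)] unfolding N_def .
  have Ne: "N \<bullet> capE = - cos \<theta>" using cap_N(4)[OF eta(1)] eta(2) unfolding N_def by simp
  have ee: "(capE::'a) \<bullet> capE = 1" using capE_props by simp
  have wT: "w \<in> tang \<theta> \<eta>"
  proof -
    have "w \<bullet> N = capE \<bullet> N + cos \<theta> * (N \<bullet> N)" unfolding w_def by (simp add: inner_add_left)
    also have "\<dots> = 0" using Ne NN by (simp add: inner_commute)
    finally show ?thesis unfolding tang_def N_def by simp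
  qed
  have we: "w \<bullet> capE = (sin \<theta>)\<^sup>2"
  proof -
    have "w \<bullet> capE = 1 - (cos \<theta>)\<^sup>2" unfolding w_def using Ne ee by (simp add: inner_add_left power2_eq_square)
    then show ?thesis using sin_cos_squared_add[of \<theta>] by linarith
  qed
  have wep: "w \<bullet> capE > 0" unfolding we using sin_pos_th[OF th] by simp
  then have w0: "w \<noteq> 0" by auto
  have "y \<bullet> L (- w) \<le> 0" unfolding L_def
    by (rule max_first_gen[OF ok eta(1) mx tang_neg[OF wT]]) (use w0 wep in \<open>auto simp: good_def divide_less_0_iff\<close>)
  then show "y \<bullet> vdiff \<theta> X \<eta> (capE + cos \<theta> *\<^sub>R (\<eta> - capc \<theta>)) \<ge> 0"
    using linear_neg[OF lin, of w] unfolding L_def w_def N_def by simp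
  have half: "y \<bullet> L z \<le> 0" if z: "z \<in> tang \<theta> \<eta>" "z \<bullet> capE = 0" for z
  proof (rule ccontr)
    assume "\<not> y \<bullet> L z \<le> 0"
    then have p: "y \<bullet> L z > 0" by simp
    define s where "s = (y \<bullet> L z) / (2 * (\<bar>y \<bullet> L w\<bar> + 1))"
    have s: "s > 0" unfolding s_def using p by (simp add: add_pos_nonneg)
    define u where "u = z - s *\<^sub>R w"
    have uT: "u \<in> tang \<theta> \<eta>" unfolding u_def by (intro tang_diff z tang_scale wT)
    have ue: "u \<bullet> capE = - s * (w \<bullet> capE)" unfolding u_def using z(2) by (simp add: inner_diff_left)
    then have ueneg: "u \<bullet> capE < 0" using s wep by (simp add: mult_pos_pos)
    then have u0: "u \<noteq> 0" by auto
    have "y \<bullet> L u \<le> 0" unfolding L_def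
      by (rule max_first_gen[OF ok eta(1) mx uT u0 good_of_neg[OF ueneg]])
    moreover have "y \<bullet> L u = y \<bullet> L z - s * (y \<bullet> L w)" unfolding u_def
      using linear_diff[OF lin] linear_scale[OF lin] by (simp add: inner_diff_right)
    ultimately have le: "y \<bullet> L z \<le> s * (y \<bullet> L w)" by simp
    have "s * (y \<bullet> L w) \<le> s * \<bar>y \<bullet> L w\<bar>" using s by (simp add: mult_left_mono)
    also have "\<dots> < s * (2 * (\<bar>y \<bullet> L w\<bar> + 1))" using s by (simp add: mult_strict_left_mono)
    also have "\<dots> = y \<bullet> L z" unfolding s_def by (simp add: add_pos_nonneg)
    finally show False using le by simp
  qed
  show "\<forall>z\<in>tang \<theta> \<eta>. z \<bullet> capE = 0 \<longrightarrow> y \<bullet> vdiff \<theta> X \<eta> z = 0"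
  proof (intro ballI impI)
    fix z assume z: "z \<in> tang \<theta> \<eta>" "z \<bullet> capE = 0"
    have "y \<bullet> L z \<le> 0" by (rule half[OF z])
    moreover have "y \<bullet> L (- z) \<le> 0" by (rule half) (use z tang_neg in auto)
    ultimately show "y \<bullet> vdiff \<theta> X \<eta> z = 0" using linear_neg[OF lin, of z] unfolding L_def by simp
  qed
qed

lemma alg_lemma:
  fixes b c s :: real
  assumes c: "c \<ge> 0" and s: "0 \<le> s" "s < 1" and e: "c - b * s \<le> - s" and n: "c\<^sup>2 - 2 * b * c * s + b\<^sup>2 = 1"
  shows "c = 0 \<and> (b = 1 \<or> b = -1)"
proof -
  have c0: "c = 0"
  proof (rule ccontr)
    assume "c \<noteq> 0"
    then have cp: "c > 0" using c by simp
    show False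
    proof (cases "s = 0")
      case True then show False using e cp by simp
    next
      case False
      then have sp: "s > 0" using s by simp
      have "(b - c * s)\<^sup>2 = 1 - c\<^sup>2 * (1 - s\<^sup>2)" using n by (simp add: power2_eq_square algebra_simps)
      moreover have "c\<^sup>2 * (1 - s\<^sup>2) > 0" using cp s sp by (simp add: power_less_one_iff abs_if)
      ultimately have "(b - c * s)\<^sup>2 < 1" by simp
      then have "b - c * s < 1" by (smt (verit) one_le_power power2_eq_square)
      then have "(b - c * s) * s < s" using sp by (simp add: mult_less_cancel_right)
      moreover have "b * s \<ge> c + s" using e by simp
      ultimately have "c * (1 - s\<^sup>2) < 0" by (simp add: power2_eq_square algebra_simps)
      moreover have "c * (1 - s\<^sup>2) > 0" using cp s sp by (simp add: power_less_one_iff abs_if)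
      ultimately show False by simp
    qed
  qed
  then have "b\<^sup>2 = 1" using n by simp
  then have "b = 1 \<or> b = -1" by (simp add: power2_eq_1_iff)
  then show ?thesis using c0 by simp
qed

lemma cap_compact: "compact (cap \<theta> :: 'a::euclidean_space set)"
proof -
  have "cap \<theta> = {x. x \<bullet> capE \<le> 0} \<inter> sphere (capc \<theta>) (1::real)"
    unfolding cap_def by (auto simp: dist_norm norm_minus_commute inner_commute)
  moreover have "closed {x::'a. x \<bullet> capE \<le> 0}" using closed_halfspace_le[of capE 0] by (simp add: inner_commute)
  ultimately show ?thesis using closed_Int_compact compact_sphere by metis
qed

lemma cap_ne: "cap \<theta> \<noteq> ({} :: 'a::euclidean_space set)"
proof -
  have "(cos \<theta> - 1) *\<^sub>R capE \<in> (cap \<theta> :: 'a set)"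
    unfolding cap_def capc_def
    by (simp add: algebra_simps cos_le_one capE_props)
  then show ?thesis by blast
qed

lemma X_cont:
  fixes X :: "'a::euclidean_space \<Rightarrow> 'a"
  assumes ok: "Xok \<theta> X UX"
  shows "continuous_on (cap \<theta>) X"
proof -
  have c: "continuous_on (cap \<theta>) (gX \<theta> X b)" if b: "b \<in> (Basis::'a set)" for b
  proof (rule continuous_at_imp_continuous_on, rule ballI)
    fix x :: 'a assume "x \<in> cap \<theta>"
    then have "gX \<theta> X b differentiable (at x)" using ok b unfolding Xok_def by blast
    then show "isCont (gX \<theta> X b) x" using frechet_derivative_works has_derivative_continuous by blast
  qed
  have "continuous_on (cap \<theta>) (\<lambda>x. \<Sum>b\<in>Basis. gX \<theta> X b x *\<^sub>R b)"
    by (intro continuous_on_sum continuous_on_scaleR c continuous_on_const)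
  moreover have "\<And>x. x \<in> cap \<theta> \<Longrightarrow> (\<Sum>b\<in>Basis. gX \<theta> X b x *\<^sub>R b) = X x"
    using ok unfolding Xok_def by (simp add: euclidean_representation)
  ultimately show ?thesis using continuous_on_cong by (metis (no_types, lifting))
qed

lemma support_eta:
  fixes \<xi> :: "'a::euclidean_space"
  assumes th: "0 < \<theta>" "\<theta> \<le> pi/2" and cp: "capillary_param \<theta> X" and ok: "Xok \<theta> X UX"
    and xi: "\<xi> \<in> cap \<theta>" and eta: "\<eta> \<in> cap \<theta>"
    and mx: "\<forall>x\<in>cap \<theta>. (\<xi> - capc \<theta>) \<bullet> X x \<le> (\<xi> - capc \<theta>) \<bullet> X \<eta>"
  shows "\<exists>b. \<xi> - capc \<theta> = b *\<^sub>R (\<eta> - capc \<theta>) \<and> (b = 1 \<or> b = -1)"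
proof -
  define v where "v = \<xi> - capc \<theta>"
  define N where "N = \<eta> - capc \<theta>"
  define L where "L = vdiff \<theta> X \<eta>"
  have lin: "linear L" unfolding L_def by (rule Xok_lin[OF ok eta])
  have vv: "v \<bullet> v = 1" using cap_N(2)[OF xi] unfolding v_def .
  have NN: "N \<bullet> N = 1" using cap_N(2)[OF eta] unfolding N_def .
  have ee: "(capE::'a) \<bullet> capE = 1" using capE_props by simp
  have e0: "\<eta> \<bullet> capE \<le> 0" using cap_N(3)[OF eta] .
  show ?thesis
  proof (cases "\<eta> \<bullet> capE < 0")
    case True
    have "\<forall>u\<in>tang \<theta> \<eta>. v \<bullet> vdiff \<theta> X \<eta> u = 0"
      by (rule interior_zero[OF ok eta True]) (use mx in \<open>simp add: v_def\<close>)
    then have vN: "v = (v \<bullet> N) *\<^sub>R N" unfolding N_def by (rule posdef_zero[OF cp ok eta])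
    have "1 = v \<bullet> v" using vv by simp
    also have "\<dots> = (v \<bullet> N) * (v \<bullet> N) * (N \<bullet> N)" by (subst (1 2) vN) simp
    finally have "(v \<bullet> N)\<^sup>2 = 1" using NN by (simp add: power2_eq_square)
    then have "v \<bullet> N = 1 \<or> v \<bullet> N = -1" by (simp add: power2_eq_1_iff)
    then show ?thesis using vN unfolding v_def N_def by blast
  next
    case False
    then have b: "\<eta> \<bullet> capE = 0" using e0 by simp
    have Ne: "N \<bullet> capE = - cos \<theta>" using cap_N(4)[OF eta] b unfolding N_def by simp
    define w where "w = capE + cos \<theta> *\<^sub>R N"
    have wT: "w \<in> tang \<theta> \<eta>"
    proof -
      have "w \<bullet> N = capE \<bullet> N + cos \<theta> * (N \<bullet> N)" unfolding w_def by (simp add: inner_add_left)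
      also have "\<dots> = 0" using Ne NN by (simp add: inner_commute)
      finally show ?thesis unfolding tang_def N_def by simp
    qed
    have we: "w \<bullet> capE = (sin \<theta>)\<^sup>2"
    proof -
      have "w \<bullet> capE = 1 - (cos \<theta>)\<^sup>2" unfolding w_def using Ne ee by (simp add: inner_add_left power2_eq_square)
      then show ?thesis using sin_cos_squared_add[of \<theta>] by linarith
    qed
    have wep: "w \<bullet> capE > 0" unfolding we using sin_pos_th[OF th] by simp
    then have w0: "w \<noteq> 0" by auto
    have vb: "\<forall>z\<in>tang \<theta> \<eta>. z \<bullet> capE = 0 \<longrightarrow> v \<bullet> L z = 0" "v \<bullet> L w \<ge> 0"
      using boundary_first[OF ok th eta b, of v] mx unfolding v_def L_def w_def N_def by auto
    have emx: "\<forall>x\<in>cap \<theta>. capE \<bullet> X x \<le> capE \<bullet> X \<eta>"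
    proof
      fix x :: 'a assume x: "x \<in> cap \<theta>"
      have "X \<eta> \<bullet> capE = 0" using cp eta b unfolding capillary_param_def by blast
      moreover have "X x \<bullet> capE \<le> 0"
      proof (cases "x \<bullet> capE < 0")
        case True then show ?thesis using cp x unfolding capillary_param_def by (meson less_imp_le)
      next
        case False then have "x \<bullet> capE = 0" using cap_N(3)[OF x] by simp
        then show ?thesis using cp x unfolding capillary_param_def by simp
      qed
      ultimately show "capE \<bullet> X x \<le> capE \<bullet> X \<eta>" by (simp add: inner_commute)
    qed
    have eb: "\<forall>z\<in>tang \<theta> \<eta>. z \<bullet> capE = 0 \<longrightarrow> capE \<bullet> L z = 0"
      using boundary_first(1)[OF ok th eta b emx] unfolding L_def by blast
    have LwN: "L w \<bullet> N = 0" using cp eta wT unfolding capillary_param_def L_def N_def by blast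
    have wLw: "w \<bullet> L w > 0" using cp eta wT w0 unfolding capillary_param_def L_def by blast
    have eLw: "capE \<bullet> L w = w \<bullet> L w"
    proof -
      have "capE = w - cos \<theta> *\<^sub>R N" unfolding w_def by simp
      then have "capE \<bullet> L w = (w - cos \<theta> *\<^sub>R N) \<bullet> L w" by simp
      also have "\<dots> = w \<bullet> L w - cos \<theta> * (N \<bullet> L w)" by (simp add: inner_diff_left)
      also have "\<dots> = w \<bullet> L w" using LwN by (simp add: inner_commute)
      finally show ?thesis .
    qed
    define c where "c = (v \<bullet> L w) / (capE \<bullet> L w)"
    have c0: "c \<ge> 0" unfolding c_def using vb(2) eLw wLw by simp
    define z where "z = v - c *\<^sub>R capE"
    have zL: "\<forall>u\<in>tang \<theta> \<eta>. z \<bullet> L u = 0"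
    proof
      fix u assume u: "u \<in> tang \<theta> \<eta>"
      define a where "a = (u \<bullet> capE) / (w \<bullet> capE)"
      define u2 where "u2 = u - a *\<^sub>R w"
      have u2T: "u2 \<in> tang \<theta> \<eta>" unfolding u2_def by (intro tang_diff u tang_scale wT)
      have u2e: "u2 \<bullet> capE = 0" unfolding u2_def a_def using wep by (simp add: inner_diff_left)
      have "z \<bullet> L u2 = v \<bullet> L u2 - c * (capE \<bullet> L u2)" unfolding z_def by (simp add: inner_diff_left)
      also have "\<dots> = 0" using vb(1) eb u2T u2e by simp
      finally have z1: "z \<bullet> L u2 = 0" .
      have "z \<bullet> L w = v \<bullet> L w - c * (capE \<bullet> L w)" unfolding z_def by (simp add: inner_diff_left)
      also have "\<dots> = 0" unfolding c_def using eLw wLw by simp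
      finally have z2: "z \<bullet> L w = 0" .
      have "u = u2 + a *\<^sub>R w" unfolding u2_def by simp
      then have "L u = L u2 + a *\<^sub>R L w" using linear_add[OF lin] linear_scale[OF lin] by metis
      then show "z \<bullet> L u = 0" using z1 z2 by (simp add: inner_add_right)
    qed
    have zN: "z = (z \<bullet> N) *\<^sub>R N" unfolding N_def by (rule posdef_zero[OF cp ok eta zL[unfolded L_def]])
    define bb where "bb = z \<bullet> N"
    have vdec: "v = c *\<^sub>R capE + bb *\<^sub>R N" using zN unfolding z_def bb_def by (simp add: algebra_simps)
    have eN: "capE \<bullet> N = - cos \<theta>" using Ne by (simp add: inner_commute)
    have "v \<bullet> v = c\<^sup>2 - 2 * bb * c * cos \<theta> + bb\<^sup>2"
      unfolding vdec using ee eN NN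
      by (simp add: inner_add_left inner_add_right inner_commute power2_eq_square algebra_simps)
    then have nv: "c\<^sup>2 - 2 * bb * c * cos \<theta> + bb\<^sup>2 = 1" using vv by simp
    have "v \<bullet> capE = c - bb * cos \<theta>" unfolding vdec using ee Ne by (simp add: inner_add_left)
    moreover have "v \<bullet> capE = \<xi> \<bullet> capE - cos \<theta>" using cap_N(4)[OF xi] unfolding v_def .
    moreover have "\<xi> \<bullet> capE \<le> 0" using cap_N(3)[OF xi] .
    ultimately have ve: "c - bb * cos \<theta> \<le> - cos \<theta>" by simp
    have cs: "0 \<le> cos \<theta>" "cos \<theta> < 1"
    proof -
      show "0 \<le> cos \<theta>" using th by (intro cos_ge_zero) auto
      have "(sin \<theta>)\<^sup>2 > 0" using sin_pos_th[OF th] by simp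
      then have "(cos \<theta>)\<^sup>2 < 1" using sin_cos_squared_add[of \<theta>] by linarith
      then show "cos \<theta> < 1" using \<open>0 \<le> cos \<theta>\<close> by (smt (verit) one_le_power)
    qed
    have "c = 0 \<and> (bb = 1 \<or> bb = -1)" by (rule alg_lemma[OF c0 cs ve nv])
    then show ?thesis using vdec unfolding v_def N_def by auto
  qed
qed

lemma support:
  fixes \<xi> :: "'a::euclidean_space"
  assumes th: "0 < \<theta>" "\<theta> \<le> pi/2" and cp: "capillary_param \<theta> X" and ok: "Xok \<theta> X UX"
    and hX: "\<forall>\<xi>\<in>cap \<theta>. h \<xi> = (\<xi> - capc \<theta>) \<bullet> X \<xi>" and pos: "\<forall>\<xi>\<in>cap \<theta>. h \<xi> > 0"
    and xi: "\<xi> \<in> cap \<theta>"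
  shows "\<forall>x\<in>cap \<theta>. (\<xi> - capc \<theta>) \<bullet> X x \<le> h \<xi>"
proof -
  define v where "v = \<xi> - capc \<theta>"
  have cont: "continuous_on (cap \<theta>) (\<lambda>x. v \<bullet> X x)"
    by (intro continuous_intros X_cont[OF ok])
  obtain \<eta> where eta: "\<eta> \<in> cap \<theta>" "\<forall>x\<in>cap \<theta>. v \<bullet> X x \<le> v \<bullet> X \<eta>"
    using continuous_attains_sup[OF cap_compact cap_ne cont] by blast
  obtain b where b: "v = b *\<^sub>R (\<eta> - capc \<theta>)" "b = 1 \<or> b = -1"
    using support_eta[OF th cp ok xi eta(1) eta(2)[unfolded v_def]] unfolding v_def by blast
  have "v \<bullet> X \<eta> \<le> h \<xi>"
  proof (cases "b = 1")
    case True
    then have "\<xi> = \<eta>" using b(1) unfolding v_def by simp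
    then show ?thesis using hX xi unfolding v_def by simp
  next
    case False
    then have "v = - (\<eta> - capc \<theta>)" using b by simp
    then have "v \<bullet> X \<eta> = - ((\<eta> - capc \<theta>) \<bullet> X \<eta>)" by (simp only: inner_minus_left)
    then have "v \<bullet> X \<eta> = - h \<eta>" using hX eta(1) by simp
    then show ?thesis using pos eta(1) xi by (smt (verit))
  qed
  then show ?thesis using eta(2) unfolding v_def by force
qed

lemma region_bound:
  fixes v :: "'a::euclidean_space" and X :: "'a \<Rightarrow> 'a"
  assumes ve: "v \<bullet> capE \<le> 0" and v0: "v \<noteq> 0" and M: "\<forall>x\<in>cap \<theta>. v \<bullet> X x \<le> M"
  shows "\<forall>y\<in>hat_region (X ` cap \<theta>). v \<bullet> y \<le> M"
proof -
  define H where "H = {x::'a. x \<bullet> capE < 0}"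
  have un: "v \<bullet> z \<le> M" if C: "C \<in> components (H - X ` cap \<theta>)" "bounded C" and z: "z \<in> C" for C z
  proof (rule ccontr)
    assume "\<not> v \<bullet> z \<le> M"
    then have zM: "v \<bullet> z > M" by simp
    have zH: "z \<in> H - X ` cap \<theta>" using in_components_subset[OF C(1)] z by blast
    define R where "R = (\<lambda>t::real. z + t *\<^sub>R v) ` {0..}"
    have cR: "connected R" unfolding R_def
      by (intro connected_continuous_image convex_connected convex_real_interval continuous_intros)
    have RS: "R \<subseteq> H - X ` cap \<theta>"
    proof
      fix p assume "p \<in> R"
      then obtain t where t: "t \<ge> 0" "p = z + t *\<^sub>R v" unfolding R_def by auto
      have "p \<bullet> capE = z \<bullet> capE + t * (v \<bullet> capE)" using t(2) by (simp add: inner_add_left)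
      also have "\<dots> \<le> z \<bullet> capE" using t(1) ve by (simp add: mult_nonneg_nonpos)
      also have "\<dots> < 0" using zH unfolding H_def by simp
      finally have pH: "p \<in> H" unfolding H_def by simp
      have "p \<notin> X ` cap \<theta>"
      proof
        assume "p \<in> X ` cap \<theta>"
        then obtain \<eta> where eta: "\<eta> \<in> cap \<theta>" "p = X \<eta>" by auto
        have "v \<bullet> p = v \<bullet> z + t * (v \<bullet> v)" using t(2) by (simp add: inner_add_right)
        also have "\<dots> \<ge> v \<bullet> z" using t(1) by simp
        finally have "v \<bullet> X \<eta> > M" using zM eta(2) by simp
        then show False using M eta(1) by fastforce
      qed
      then show "p \<in> H - X ` cap \<theta>" using pH by simp
    qed
    have "z \<in> R" unfolding R_def by (rule image_eqI[of _ _ 0]) auto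
    then have "C \<inter> R \<noteq> {}" using z by blast
    then have RC: "R \<subseteq> C" using components_maximal[OF C(1) cR RS] by blast
    obtain B where B: "\<forall>x\<in>C. norm x \<le> B" using C(2) unfolding bounded_iff by blast
    define t where "t = (\<bar>B\<bar> + norm z + 1) / norm v"
    have nv: "norm v > 0" using v0 by simp
    have t0: "t \<ge> 0" unfolding t_def using nv by simp
    have tv: "t * norm v = \<bar>B\<bar> + norm z + 1" unfolding t_def using nv by simp
    have "z + t *\<^sub>R v \<in> R" unfolding R_def using t0 by auto
    then have "norm (z + t *\<^sub>R v) \<le> B" using RC B by blast
    moreover have "norm (t *\<^sub>R v) \<le> norm (z + t *\<^sub>R v) + norm z"
      using norm_triangle_ineq4[of "z + t *\<^sub>R v" z] by simp
    moreover have "norm (t *\<^sub>R v) = t * norm v" using t0 by simp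
    ultimately show False using tv by linarith
  qed
  have "\<Union>{C \<in> components (H - X ` cap \<theta>). bounded C} \<subseteq> {y. v \<bullet> y \<le> M}"
    using un by blast
  then have "closure (\<Union>{C \<in> components (H - X ` cap \<theta>). bounded C}) \<subseteq> {y. v \<bullet> y \<le> M}"
    by (rule closure_minimal) (rule closed_halfspace_le)
  then show ?thesis unfolding hat_region_def H_def by blast
qed

lemma cos_th: "0 < \<theta> \<Longrightarrow> \<theta> \<le> pi/2 \<Longrightarrow> 0 \<le> cos \<theta> \<and> cos \<theta> < 1"
proof -
  assume th: "0 < \<theta>" "\<theta> \<le> pi/2"
  have c0: "0 \<le> cos \<theta>" using th by (intro cos_ge_zero) auto
  have "(sin \<theta>)\<^sup>2 > 0" using sin_pos_th[OF th] by simp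
  then have "(cos \<theta>)\<^sup>2 < 1" using sin_cos_squared_add[of \<theta>] by linarith
  then have "cos \<theta> < 1" using c0 by (smt (verit) one_le_power)
  then show ?thesis using c0 by simp
qed

lemma refl_props:
  fixes \<xi> x0 :: "'a::euclidean_space"
  assumes xi: "\<xi> \<in> cap \<theta>" and x0: "x0 \<bullet> capE = 0"
  shows "refl_e \<xi> \<in> cap \<theta>" "(refl_e \<xi> - capc \<theta>) \<bullet> capE = (\<xi> - capc \<theta>) \<bullet> capE"
    "(refl_e \<xi> - capc \<theta>) \<bullet> x0 = - ((\<xi> - capc \<theta>) \<bullet> x0)"
proof -
  have ee: "(capE::'a) \<bullet> capE = 1" using capE_props by simp
  have e0: "x0 \<bullet> capE = 0" by (rule x0)
  have re: "refl_e \<xi> \<bullet> capE = \<xi> \<bullet> capE" unfolding refl_e_def using ee by (simp add: inner_diff_left)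
  have "(refl_e \<xi> - capc \<theta>) \<bullet> (refl_e \<xi> - capc \<theta>) = (\<xi> - capc \<theta>) \<bullet> (\<xi> - capc \<theta>)"
    unfolding refl_e_def capc_def using ee
    by (simp add: inner_diff_left inner_diff_right inner_commute power2_eq_square algebra_simps)
  then have "norm (refl_e \<xi> - capc \<theta>) = norm (\<xi> - capc \<theta>)" by (simp add: norm_eq_sqrt_inner)
  then show "refl_e \<xi> \<in> cap \<theta>" using xi re unfolding cap_def by simp
  show "(refl_e \<xi> - capc \<theta>) \<bullet> capE = (\<xi> - capc \<theta>) \<bullet> capE" using re by (simp add: inner_diff_left)
  have ex: "capE \<bullet> x0 = 0" using x0 by (simp add: inner_commute)
  show "(refl_e \<xi> - capc \<theta>) \<bullet> x0 = - ((\<xi> - capc \<theta>) \<bullet> x0)"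
    unfolding refl_e_def capc_def by (simp add: inner_diff_left ex)
qed

lemma rho_elem_bound:
  fixes \<xi>0 :: "'a::euclidean_space"
  assumes th: "0 < \<theta>" "\<theta> \<le> pi/2" and cp: "capillary_param \<theta> X" and ok: "Xok \<theta> X UX"
    and hX: "\<forall>\<xi>\<in>cap \<theta>. h \<xi> = (\<xi> - capc \<theta>) \<bullet> X \<xi>" and pos: "\<forall>\<xi>\<in>cap \<theta>. h \<xi> > 0"
    and ev: "capillary_even \<theta> h" and xi: "\<xi>0 \<in> cap \<theta>"
    and r: "r > 0" and x0: "x0 \<bullet> capE = 0" and sub: "cap_ball \<theta> r x0 \<subseteq> hat_region (X ` cap \<theta>)"
  shows "r * (1 - cos \<theta>) \<le> h \<xi>0"
proof -
  have ee: "(capE::'a) \<bullet> capE = 1" using capE_props by simp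
  have cs: "0 \<le> cos \<theta>" "cos \<theta> < 1" using cos_th[OF th] by auto
  have key: "N \<bullet> x0 + r * cos \<theta> * (N \<bullet> capE) + r \<le> h \<xi>"
    if xi: "\<xi> \<in> cap \<theta>" and N: "N = \<xi> - capc \<theta>" for \<xi> N
  proof -
    have NN: "N \<bullet> N = 1" using cap_N(2)[OF xi] N by simp
    have Ne: "N \<bullet> capE = \<xi> \<bullet> capE - cos \<theta>" using cap_N(4)[OF xi] N by simp
    define y where "y = x0 + (r * cos \<theta>) *\<^sub>R capE + r *\<^sub>R N"
    have "y \<bullet> capE = r * (cos \<theta> + N \<bullet> capE)" unfolding y_def using x0 ee by (simp add: inner_add_left algebra_simps)
    also have "cos \<theta> + N \<bullet> capE = \<xi> \<bullet> capE" using Ne by simp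
    finally have "y \<bullet> capE = r * (\<xi> \<bullet> capE)" .
    also have "\<dots> \<le> 0" using r cap_N(3)[OF xi] by (simp add: mult_nonneg_nonpos)
    finally have ye: "y \<bullet> capE \<le> 0" .
    have "norm (y - (x0 + (r * cos \<theta>) *\<^sub>R capE)) = r * norm N" unfolding y_def using r by simp
    also have "\<dots> = r" using cap_N(1)[OF xi] N by simp
    finally have "y \<in> cap_ball \<theta> r x0" unfolding cap_ball_def using ye by simp
    then have yK: "y \<in> hat_region (X ` cap \<theta>)" using sub by blast
    have ve: "N \<bullet> capE \<le> 0" using Ne cap_N(3)[OF xi] cs by simp
    have v0: "N \<noteq> 0" using NN by auto
    have "\<forall>x\<in>cap \<theta>. N \<bullet> X x \<le> h \<xi>" using support[OF th cp ok hX pos xi] N by simp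
    then have "N \<bullet> y \<le> h \<xi>" using region_bound[OF ve v0, of \<theta> X "h \<xi>"] yK by blast
    moreover have "N \<bullet> y = N \<bullet> x0 + r * cos \<theta> * (N \<bullet> capE) + r"
      unfolding y_def using NN by (simp add: inner_add_right inner_commute)
    ultimately show ?thesis by simp
  qed
  define N0 where "N0 = \<xi>0 - capc \<theta>"
  have k1: "N0 \<bullet> x0 + r * cos \<theta> * (N0 \<bullet> capE) + r \<le> h \<xi>0" using key[OF xi] N0_def by simp
  have k2: "(refl_e \<xi>0 - capc \<theta>) \<bullet> x0 + r * cos \<theta> * ((refl_e \<xi>0 - capc \<theta>) \<bullet> capE) + r \<le> h (refl_e \<xi>0)"
    using key[OF refl_props(1)[OF xi x0]] by simp
  have hr: "h (refl_e \<xi>0) = h \<xi>0" using ev xi unfolding capillary_even_def by blast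
  have q1: "(refl_e \<xi>0 - capc \<theta>) \<bullet> x0 = - (N0 \<bullet> x0)" unfolding N0_def by (rule refl_props(3)[OF xi x0])
  have q2: "(refl_e \<xi>0 - capc \<theta>) \<bullet> capE = N0 \<bullet> capE" unfolding N0_def by (rule refl_props(2)[OF xi x0])
  have k2': "- (N0 \<bullet> x0) + r * cos \<theta> * (N0 \<bullet> capE) + r \<le> h \<xi>0"
    using k2 unfolding q1 q2 hr .
  have "\<bar>N0 \<bullet> capE\<bar> \<le> norm N0 * norm (capE::'a)" by (rule Cauchy_Schwarz_ineq2)
  then have "\<bar>N0 \<bullet> capE\<bar> \<le> 1" using cap_N(1)[OF xi] unfolding N0_def by (simp add: capE_props)
  then have "N0 \<bullet> capE \<ge> -1" by (simp add: abs_le_iff)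
  then have "r * cos \<theta> * (-1) \<le> r * cos \<theta> * (N0 \<bullet> capE)"
    by (rule mult_left_mono) (use r cs in simp)
  moreover have "r * (1 - cos \<theta>) = r - r * cos \<theta>" by (simp add: algebra_simps)
  ultimately show ?thesis using k1 k2' by linarith
qed

lemma sc_cont:
  fixes f :: "'a::euclidean_space \<Rightarrow> real"
  assumes "smooth_on_cap \<theta> f" shows "continuous_on (cap \<theta>) f"
proof -
  obtain U where U: "open U" "cap \<theta> \<subseteq> U" "smooth_on U (cap_ext \<theta> f)" "\<forall>x\<in>cap \<theta>. cap_ext \<theta> f x = f x"
    using cap_ext_props[OF assms] by blast
  have "continuous_on (cap \<theta>) (cap_ext \<theta> f)"
  proof (rule continuous_at_imp_continuous_on, rule ballI)
    fix x :: 'a assume "x \<in> cap \<theta>"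
    then have "cap_ext \<theta> f differentiable (at x)" using smooth_diff0[OF U(3,1)] U(2) by blast
    then show "isCont (cap_ext \<theta> f) x" using frechet_derivative_works has_derivative_continuous by blast
  qed
  then show ?thesis using U(4) continuous_on_cong by (metis (no_types, lifting))
qed

theorem lemma3p2:
  fixes f :: "'a::euclidean_space \<Rightarrow> real" and \<theta> :: real and k :: nat
  assumes "0 < \<theta>" and "\<theta> \<le> pi / 2"
    and "1 \<le> k" and "k \<le> DIM('a) - 2"
    and "smooth_on_cap \<theta> f" and "\<forall>\<xi>\<in>cap \<theta>. f \<xi> > 0"
  shows "\<exists>C>0. \<forall>h :: 'a \<Rightarrow> real.
           smooth_on_cap \<theta> h \<and> (\<forall>\<xi>\<in>cap \<theta>. h \<xi> > 0) \<and> admissible \<theta> h \<and>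
           (\<forall>\<xi>\<in>cap \<theta>. sigma_cap \<theta> h (DIM('a) - 1) \<xi> / sigma_cap \<theta> h (DIM('a) - 1 - k) \<xi>
                         = inverse (f \<xi>)) \<and>
           neumann_bc \<theta> h
           \<longrightarrow> Inf (h ` cap \<theta>) \<le> C \<and>
               (capillary_even \<theta> h \<longrightarrow>
                  (\<forall>X. capillary_param \<theta> X \<and> (\<forall>\<xi>\<in>cap \<theta>. h \<xi> = (\<xi> - capc \<theta>) \<bullet> X \<xi>)
                       \<longrightarrow> rho_minus (hat_region (X ` cap \<theta>)) \<theta> \<le> C))"
proof -
  note th = assms(1,2) and kk = assms(3,4)
  obtain \<xi>f where xf: "\<xi>f \<in> cap \<theta>" "\<forall>y\<in>cap \<theta>. f \<xi>f \<le> f y"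
    using continuous_attains_inf[OF cap_compact cap_ne sc_cont[OF assms(5)]] by blast
  define fm where "fm = f \<xi>f"
  have fm: "fm > 0" "\<forall>\<xi>\<in>cap \<theta>. fm \<le> f \<xi>" using xf assms(6) unfolding fm_def by auto
  define C1 where "C1 = max 1 (2 ^ (DIM('a) - 1) / fm)"
  have cs: "0 \<le> cos \<theta>" "cos \<theta> < 1" using cos_th[OF th] by auto
  define C where "C = max C1 (max (C1 / (1 - cos \<theta>)) (Sup ({}::real set)))"
  have C1C: "C1 \<le> C" unfolding C_def by simp
  have C0: "C > 0" using C1C unfolding C1_def by linarith
  show ?thesis
  proof (intro exI[of _ C] conjI allI impI C0)
    fix h :: "'a \<Rightarrow> real"
    assume H: "smooth_on_cap \<theta> h \<and> (\<forall>\<xi>\<in>cap \<theta>. h \<xi> > 0) \<and> admissible \<theta> h \<and>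
           (\<forall>\<xi>\<in>cap \<theta>. sigma_cap \<theta> h (DIM('a) - 1) \<xi> / sigma_cap \<theta> h (DIM('a) - 1 - k) \<xi>
                         = inverse (f \<xi>)) \<and> neumann_bc \<theta> h"
    have sm: "smooth_on_cap \<theta> h" and pos: "\<forall>\<xi>\<in>cap \<theta>. h \<xi> > 0"
      and eq: "\<forall>\<xi>\<in>cap \<theta>. sigma_cap \<theta> h (DIM('a) - 1) \<xi> / sigma_cap \<theta> h (DIM('a) - 1 - k) \<xi> = inverse (f \<xi>)"
      and nb: "neumann_bc \<theta> h" using H by auto
    obtain \<xi>0 where x0: "\<xi>0 \<in> cap \<theta>" "\<forall>y\<in>cap \<theta>. h \<xi>0 \<le> h y"
      using continuous_attains_inf[OF cap_compact cap_ne sc_cont[OF sm]] by blast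
    have hC1: "h \<xi>0 \<le> C1" unfolding C1_def by (rule part1[OF th kk fm sm pos eq nb x0])
    have "Inf (h ` cap \<theta>) = h \<xi>0" by (rule cInf_eq_minimum) (use x0 in auto)
    then show "Inf (h ` cap \<theta>) \<le> C" using hC1 C1C by simp
    assume ev: "capillary_even \<theta> h"
    fix X :: "'a \<Rightarrow> 'a"
    assume XX: "capillary_param \<theta> X \<and> (\<forall>\<xi>\<in>cap \<theta>. h \<xi> = (\<xi> - capc \<theta>) \<bullet> X \<xi>)"
    then have cp: "capillary_param \<theta> X" and hX: "\<forall>\<xi>\<in>cap \<theta>. h \<xi> = (\<xi> - capc \<theta>) \<bullet> X \<xi>" by auto
    obtain UX where "open UX \<and> cap \<theta> \<subseteq> UX \<and> (\<forall>b\<in>Basis. \<forall>x\<in>UX. gX \<theta> X b differentiable (at x))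
     \<and> (\<forall>b\<in>Basis. \<forall>x\<in>cap \<theta>. gX \<theta> X b x = X x \<bullet> b)"
      using X_nbhd[of \<theta> X] cp unfolding capillary_param_def by blast
    then have ok: "Xok \<theta> X UX" unfolding Xok_def by blast
    define R where "R = {r. r > 0 \<and> (\<exists>x0. x0 \<bullet> capE = 0 \<and> cap_ball \<theta> r x0 \<subseteq> hat_region (X ` cap \<theta>))}"
    have rho: "rho_minus (hat_region (X ` cap \<theta>)) \<theta> = Sup R" unfolding rho_minus_def R_def ..
    show "rho_minus (hat_region (X ` cap \<theta>)) \<theta> \<le> C"
    proof (cases "R = {}")
      case True then show ?thesis unfolding rho C_def by simp
    next
      case False
      have "Sup R \<le> C1 / (1 - cos \<theta>)"
      proof (rule cSup_least[OF False])
        fix r assume "r \<in> R"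
        then obtain x0 where r: "r > 0" "x0 \<bullet> capE = 0" "cap_ball \<theta> r x0 \<subseteq> hat_region (X ` cap \<theta>)"
          unfolding R_def by blast
        have "r * (1 - cos \<theta>) \<le> h \<xi>0" by (rule rho_elem_bound[OF th cp ok hX pos ev x0(1) r])
        then have "r * (1 - cos \<theta>) \<le> C1" using hC1 by simp
        then show "r \<le> C1 / (1 - cos \<theta>)" using cs by (simp add: pos_le_divide_eq)
      qed
      then show ?thesis unfolding rho C_def by simp
    qed
  qed
qed

end
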